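(* Fix a function $\alpha\in\mathcal A$ such that $\alpha(\lambda)=1$ for all sufficiently large $\lambda$ and $\alpha(\lambda)=0$ for all sufficiently negative $\lambda$. For $A_n,A\in\mathcal S$ the following are equivalent: (i) $\rho(A_n,A)\to 0$; (ii) $\|f(A_n)-f(A)\|\to 0$ for every $f\in\mathcal A$; (iii) $\gamma(A_n,A)\to 0$ and $\|\alpha(A_n)-\alpha(A)\|\to 0$.
   Context: Let $H$ be a separable real Hilbert space; operators are extended complex-linearly to the complexification of $H$ whenever complex numbers appear. $\mathcal S$ denotes the set of densely defined selfadjoint operators on $H$. The Riesz map is $\Psi(A)=A(1+A^2)^{-1/2}$; the Riesz metric is $\rho(A_0,A_1)=\|\Psi(A_0)-\Psi(A_1)\|$; the gap metric is $\gamma(A_0,A_1)=\|(\mathbf i+A_0)^{-1}-(\mathbf i+A_1)^{-1}\|+\|(\mathbf i-A_0)^{-1}-(\mathbf i-A_1)^{-1}\|$. $\mathcal A$ is the $C^*$-algebra of continuous functions $f:\mathbb R\to\mathbb C$ for which both limits $\lim_{\lambda\to\pm\infty}f(\lambda)$ exist. For $A\in\mathcal S$ and $f\in\mathcal A$, $f(A)$ is defined by the functional calculus. *)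

theory Defs
  imports "HOL-Analysis.Analysis" "HOL-Computational_Algebra.Polynomial"
begin

text \<open>A (possibly unbounded) operator on a real Hilbert space 'a is a pair (domain, map).\<close>
type_synonym 'a op = "'a set \<times> ('a \<Rightarrow> 'a)"

definition dsa :: "('a::{real_inner,complete_space}) op \<Rightarrow> bool" where
  "dsa A \<longleftrightarrow> (let D = fst A; T = snd A in
     subspace D \<and> closure D = UNIV \<and>
     (\<forall>x\<in>D. \<forall>y\<in>D. T (x + y) = T x + T y) \<and>
     (\<forall>c. \<forall>x\<in>D. T (c *\<^sub>R x) = c *\<^sub>R T x) \<and>
     (\<forall>x\<in>D. \<forall>y\<in>D. inner (T x) y = inner x (T y)) \<and>
     (\<forall>y z. (\<forall>x\<in>D. inner (T x) y = inner x z) \<longrightarrow> y \<in> D))"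

text \<open>Complexification: H_C = H \<times> H, (u,v) = u + i v; norm of the product type is the Hilbert norm.\<close>
definition cmul :: "complex \<Rightarrow> 'a::real_vector \<times> 'a \<Rightarrow> 'a \<times> 'a" where
  "cmul c w = (Re c *\<^sub>R fst w - Im c *\<^sub>R snd w, Re c *\<^sub>R snd w + Im c *\<^sub>R fst w)"

definition cext :: "('a \<Rightarrow> 'a) \<Rightarrow> 'a \<times> 'a \<Rightarrow> 'a \<times> 'a" where
  "cext T w = (T (fst w), T (snd w))"

text \<open>(c + s A)^{-1} on the complexification, s = 1 or s = -1.\<close>
definition shifted_inv :: "('a::{real_inner,complete_space}) op \<Rightarrow> complex \<Rightarrow> real \<Rightarrow> 'a \<times> 'a \<Rightarrow> 'a \<times> 'a" where
  "shifted_inv A c s w = (THE x. x \<in> fst A \<times> fst A \<and> cmul c x + s *\<^sub>R cext (snd A) x = w)"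

definition gap_metric :: "('a::{real_inner,complete_space}) op \<Rightarrow> 'a op \<Rightarrow> real" where
  "gap_metric A0 A1 =
     onorm (\<lambda>w. shifted_inv A0 \<i> 1 w - shifted_inv A1 \<i> 1 w) +
     onorm (\<lambda>w. shifted_inv A0 \<i> (-1) w - shifted_inv A1 \<i> (-1) w)"

definition one_plus_sq_inv :: "('a::{real_inner,complete_space}) op \<Rightarrow> 'a \<Rightarrow> 'a" where
  "one_plus_sq_inv A w = (THE x. x \<in> fst A \<and> snd A x \<in> fst A \<and> x + snd A (snd A x) = w)"

definition inv_sqrt_one_plus_sq :: "('a::{real_inner,complete_space}) op \<Rightarrow> 'a \<Rightarrow> 'a" where
  "inv_sqrt_one_plus_sq A = (THE S. bounded_linear S \<and> (\<forall>x y. inner (S x) y = inner x (S y)) \<and>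
       (\<forall>x. 0 \<le> inner (S x) x) \<and> S \<circ> S = one_plus_sq_inv A)"

definition riesz :: "('a::{real_inner,complete_space}) op \<Rightarrow> 'a \<Rightarrow> 'a" where
  "riesz A x = snd A (inv_sqrt_one_plus_sq A x)"

definition riesz_metric :: "('a::{real_inner,complete_space}) op \<Rightarrow> 'a op \<Rightarrow> real" where
  "riesz_metric A0 A1 = onorm (\<lambda>x. riesz A0 x - riesz A1 x)"

definition algA :: "(real \<Rightarrow> complex) set" where
  "algA = {f. continuous_on UNIV f \<and> (\<exists>l. (f \<longlongrightarrow> l) at_top) \<and> (\<exists>l. (f \<longlongrightarrow> l) at_bot)}"

definition psi :: "real \<Rightarrow> real" where
  "psi l = l / sqrt (1 + l\<^sup>2)"

definition poly_op :: "complex poly \<Rightarrow> ('b::real_vector \<times> 'b \<Rightarrow> 'b \<times> 'b) \<Rightarrow> 'b \<times> 'b \<Rightarrow> 'b \<times> 'b" where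
  "poly_op p B x = (\<Sum>k\<le>degree p. cmul (coeff p k) ((B ^^ k) x))"

text \<open>Functional calculus: f(A) = g(\<Psi>(A)) with g = f \<circ> \<psi>^{-1} (continuously extended to [-1,1]),
  realised as the norm limit of p_k(\<Psi>(A)) for polynomials p_k with p_k \<circ> \<psi> \<rightarrow> f uniformly on \<real>.\<close>
definition fcalc :: "(real \<Rightarrow> complex) \<Rightarrow> ('a::{real_inner,complete_space}) op \<Rightarrow> 'a \<times> 'a \<Rightarrow> 'a \<times> 'a" where
  "fcalc f A = (THE B. bounded_linear B \<and>
     (\<forall>p :: nat \<Rightarrow> complex poly.
        (\<forall>e>0. \<forall>\<^sub>F k in sequentially. \<forall>l. cmod (poly (p k) (complex_of_real (psi l)) - f l) < e)
        \<longrightarrow> (\<lambda>k. onorm (\<lambda>x. poly_op (p k) (cext (riesz A)) x - B x)) \<longlonglongrightarrow> 0))"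

end

theory Submission
  imports Defs "HOL-Computational_Algebra.Fundamental_Theorem_Algebra" "HOL-Real_Asymp.Real_Asymp"
begin

lemma parallelogram_ineq:
  fixes a b :: "'b::real_inner"
  shows "norm (a - b)^2 + norm (a + b)^2 = 2 * norm a ^2 + 2 * norm b ^2"
  by (simp add: power2_norm_eq_inner inner_add inner_diff inner_commute algebra_simps)

lemma eps_lim: "(\<lambda>n::nat. 1 / (real n + 1)) \<longlonglongrightarrow> 0"
  using LIMSEQ_inverse_real_of_nat by (simp add: inverse_eq_divide add.commute)

lemma proj_exists:
  fixes M :: "'b::{real_inner,complete_space} set"
  assumes sub: "subspace M" and cl: "closed M"
  shows "\<exists>m\<in>M. \<forall>y\<in>M. inner (x - m) y = 0"
proof -
  define d where "d = infdist x M"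
  have Mne: "M \<noteq> {}" using sub subspace_0 by blast
  have d0: "d \<ge> 0" unfolding d_def by (rule infdist_nonneg)
  have dle: "d \<le> norm (x - y)" if "y \<in> M" for y
    using infdist_le[OF that, of x] by (simp add: d_def dist_norm)
  have "\<exists>y\<in>M. norm (x - y) < d + 1 / (real n + 1)" for n :: nat
  proof -
    have "infdist x M < d + 1 / (real n + 1)" using d_def by (simp add: add_pos_pos)
    then have "(INF a\<in>M. dist x a) < d + 1 / (real n + 1)" using infdist_notempty[OF Mne] by simp
    then obtain a where "a \<in> M" "dist x a < d + 1 / (real n + 1)"
    proof -
      have "bdd_below ((\<lambda>a. dist x a) ` M)" by (rule bdd_belowI2[of _ 0]) simp
      then show ?thesis using cINF_less_iff[OF Mne, of "\<lambda>a. dist x a"] that \<open>(INF a\<in>M. dist x a) < _\<close> by blast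
    qed
    then show ?thesis by (auto simp: dist_norm)
  qed
  then obtain y where yM: "\<And>n. y n \<in> M" and yd: "\<And>n. norm (x - y n) < d + 1 / (real n + 1)"
    by metis
  define \<epsilon> where "\<epsilon> n = 1 / (real n + 1)" for n :: nat
  have ep: "0 < \<epsilon> n" "\<epsilon> n \<le> 1" for n by (auto simp: \<epsilon>_def field_simps)
  have key: "norm (y n - y m)^2 \<le> (4*d+2) * (\<epsilon> n + \<epsilon> m)" for n m
  proof -
    have mid: "(1/2) *\<^sub>R (y n + y m) \<in> M"
      using sub yM by (simp add: subspace_add subspace_scale)
    have "2 * d \<le> norm ((x - y n) + (x - y m))"
    proof -
      have "(x - y n) + (x - y m) = 2 *\<^sub>R (x - (1/2) *\<^sub>R (y n + y m))"
        by (simp add: scaleR_2 algebra_simps)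
      then have "norm ((x - y n) + (x - y m)) = 2 * norm (x - (1/2) *\<^sub>R (y n + y m))" by simp
      then show ?thesis using dle[OF mid] by simp
    qed
    then have "(2*d)^2 \<le> norm ((x - y n) + (x - y m))^2"
      by (rule power_mono) (use d0 in simp)
    then have h1: "4 * d^2 \<le> norm ((x - y n) + (x - y m))^2"
      by (simp add: power_mult_distrib)
    have h2: "norm (x - y n)^2 \<le> (d + \<epsilon> n)^2"
      using yd[of n] by (simp add: \<epsilon>_def power_mono)
    have h3: "norm (x - y m)^2 \<le> (d + \<epsilon> m)^2"
      using yd[of m] by (simp add: \<epsilon>_def power_mono)
    have par: "norm ((x - y n) - (x - y m))^2 + norm ((x - y n) + (x - y m))^2 = 2 * norm (x - y n)^2 + 2 * norm (x - y m)^2"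
      by (rule parallelogram_ineq)
    have eq: "(x - y n) - (x - y m) = y m - y n" by simp
    have "norm (y n - y m)^2 \<le> 2 * (d + \<epsilon> n)^2 + 2 * (d + \<epsilon> m)^2 - 4 * d^2"
    proof -
      have "norm (y n - y m)^2 + norm ((x - y n) + (x - y m))^2 = 2 * norm (x - y n)^2 + 2 * norm (x - y m)^2"
        using par unfolding eq by (simp add: norm_minus_commute)
      then show ?thesis using h1 h2 h3 by linarith
    qed
    also have "\<dots> = 4*d*\<epsilon> n + 2 * \<epsilon> n ^2 + 4*d*\<epsilon> m + 2 * \<epsilon> m^2" by (simp add: power2_eq_square algebra_simps)
    also have "\<dots> \<le> (4*d+2) * (\<epsilon> n + \<epsilon> m)"
    proof -
      have "\<epsilon> n ^2 \<le> \<epsilon> n" "\<epsilon> m ^2 \<le> \<epsilon> m" using ep by (auto simp: power2_eq_square mult_le_cancel_right1 intro: mult_left_le_one_le)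
      then show ?thesis by (simp add: algebra_simps)
    qed
    finally show ?thesis .
  qed
  have "Cauchy y"
  proof (rule metric_CauchyI)
    fix e :: real assume e: "e > 0"
    obtain N :: nat where N: "(4*d+2) * 2 / e^2 < real N" using reals_Archimedean2 by blast
    show "\<exists>N. \<forall>m\<ge>N. \<forall>n\<ge>N. dist (y m) (y n) < e"
    proof (intro exI allI impI)
      fix m n assume mn: "N \<le> m" "N \<le> n"
      have em: "\<epsilon> m \<le> 1 / (real N + 1)" "\<epsilon> n \<le> 1 / (real N + 1)"
        using mn by (auto simp: \<epsilon>_def frac_le)
      have pos: "0 < 4*d+2" using d0 by simp
      have "norm (y m - y n)^2 \<le> (4*d+2) * (2 / (real N + 1))"
      proof -
        have "\<epsilon> m + \<epsilon> n \<le> 2 / (real N + 1)" using em by simp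
        then have "(4*d+2) * (\<epsilon> m + \<epsilon> n) \<le> (4*d+2) * (2 / (real N + 1))"
          using pos by (intro mult_left_mono) auto
        then show ?thesis using key[of m n] by linarith
      qed
      also have "\<dots> < e^2"
      proof -
        have "(4*d+2) * 2 < e^2 * (real N + 1)" using N e
          by (simp add: pos_divide_less_eq algebra_simps) (smt (verit) mult_nonneg_nonneg zero_le_power2 of_nat_0_le_iff)
        then show ?thesis by (simp add: field_simps)
      qed
      finally have "norm (y m - y n)^2 < e^2" .
      then have "norm (y m - y n) < e" using e by (simp add: power_less_imp_less_base)
      then show "dist (y m) (y n) < e" by (simp add: dist_norm)
    qed
  qed
  then obtain m where lim: "y \<longlonglongrightarrow> m" using complete_UNIV convergent_eq_Cauchy by blast
  have mM: "m \<in> M" using cl yM lim closed_sequentially by blast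
  have nm: "norm (x - m) \<le> d"
  proof -
    have "(\<lambda>n. norm (x - y n)) \<longlonglongrightarrow> norm (x - m)" by (intro tendsto_intros lim)
    moreover have "(\<lambda>n. d + \<epsilon> n) \<longlonglongrightarrow> d"
      unfolding \<epsilon>_def using tendsto_add[OF tendsto_const[of d] eps_lim] by simp
    ultimately show ?thesis using yd unfolding \<epsilon>_def
      by (intro LIMSEQ_le) (auto intro: less_imp_le)
  qed
  show ?thesis
  proof (intro bexI[OF _ mM] ballI)
    fix z assume zM: "z \<in> M"
    show "inner (x - m) z = 0"
    proof (rule ccontr)
      assume c: "inner (x - m) z \<noteq> 0"
      then have z0: "z \<noteq> 0" by auto
      define t where "t = inner (x - m) z / inner z z"
      have zz: "inner z z > 0" using z0 by simp
      have "m + t *\<^sub>R z \<in> M" using sub mM zM by (simp add: subspace_add subspace_scale)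
      then have "d \<le> norm (x - (m + t *\<^sub>R z))" by (rule dle)
      then have "norm (x - m)^2 \<le> norm ((x - m) - t *\<^sub>R z)^2" using nm
        by (smt (verit) diff_diff_eq norm_ge_zero power_mono)
      also have "\<dots> = norm (x - m)^2 - 2 * t * inner (x - m) z + t^2 * inner z z"
        unfolding power2_norm_eq_inner by (simp add: inner_diff inner_commute algebra_simps power2_eq_square)
      also have "\<dots> = norm (x - m)^2 - (inner (x - m) z)^2 / inner z z"
        using zz by (simp add: t_def power2_eq_square field_simps)
      finally have "(inner (x - m) z)^2 / inner z z \<le> 0" by simp
      moreover have "(inner (x - m) z)^2 / inner z z > 0" using c zz by simp
      ultimately show False by simp
    qed
  qed
qed

lemma subspace_closure_gen:
  fixes V :: "'b::real_normed_vector set"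
  assumes "subspace V" shows "subspace (closure V)"
  unfolding subspace_def
proof (intro conjI ballI allI)
  show "0 \<in> closure V" using assms subspace_0 closure_subset by blast
next
  fix x y assume x: "x \<in> closure V" and y: "y \<in> closure V"
  obtain a where a: "\<And>n. a n \<in> V" "a \<longlonglongrightarrow> x" using x unfolding closure_sequential by metis
  obtain b where b: "\<And>n. b n \<in> V" "b \<longlonglongrightarrow> y" using y unfolding closure_sequential by metis
  have "(\<lambda>n. a n + b n) \<longlonglongrightarrow> x + y" using a b by (intro tendsto_add)
  moreover have "\<And>n. a n + b n \<in> V" using a b assms subspace_add by blast
  ultimately show "x + y \<in> closure V" unfolding closure_sequential by metis
next
  fix c :: real and x assume x: "x \<in> closure V"
  obtain a where a: "\<And>n. a n \<in> V" "a \<longlonglongrightarrow> x" using x unfolding closure_sequential by metis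
  have "(\<lambda>n. c *\<^sub>R a n) \<longlonglongrightarrow> c *\<^sub>R x" using a by (intro tendsto_scaleR tendsto_const)
  moreover have "\<And>n. c *\<^sub>R a n \<in> V" using a assms subspace_scale by blast
  ultimately show "c *\<^sub>R x \<in> closure V" unfolding closure_sequential by metis
qed

lemma orth_nonzero:
  fixes M :: "'b::{real_inner,complete_space} set"
  assumes "subspace M" "closed M" "M \<noteq> UNIV"
  shows "\<exists>z. z \<noteq> 0 \<and> (\<forall>y\<in>M. inner z y = 0)"
proof -
  obtain x where x: "x \<notin> M" using assms by blast
  obtain m where m: "m \<in> M" "\<forall>y\<in>M. inner (x - m) y = 0" using proj_exists[OF assms(1,2)] by blast
  have "x - m \<noteq> 0" using x m by auto
  then show ?thesis using m by blast
qed

lemma dense_if_orth: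
  fixes V :: "'b::{real_inner,complete_space} set"
  assumes "subspace V" "\<And>z. (\<forall>y\<in>V. inner z y = 0) \<Longrightarrow> z = 0"
  shows "closure V = UNIV"
proof (rule ccontr)
  assume "closure V \<noteq> UNIV"
  then obtain z where z: "z \<noteq> 0" "\<forall>y\<in>closure V. inner z y = 0"
    using orth_nonzero[OF subspace_closure_gen[OF assms(1)]] by blast
  then show False using assms(2)[of z] closure_subset by blast
qed

lemma dense_zero:
  fixes D :: "'b::real_inner set"
  assumes "closure D = UNIV" "\<And>y. y \<in> D \<Longrightarrow> inner y u = 0"
  shows "u = 0"
proof -
  have "u \<in> closure D" using assms by simp
  then obtain a where a: "\<And>n. a n \<in> D" "a \<longlonglongrightarrow> u" unfolding closure_sequential by metis
  have "(\<lambda>n. inner (a n) u) \<longlonglongrightarrow> inner u u" using a by (intro tendsto_intros)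
  moreover have "(\<lambda>n. inner (a n) u) = (\<lambda>n. 0)" using a assms by auto
  ultimately have "inner u u = 0" using LIMSEQ_unique by fastforce
  then show ?thesis by simp
qed

definition sa :: "('b::real_inner \<Rightarrow> 'b) \<Rightarrow> bool" where
  "sa X \<longleftrightarrow> bounded_linear X \<and> (\<forall>x y. inner (X x) y = inner x (X y))"

definition posop :: "('b::real_inner \<Rightarrow> 'b) \<Rightarrow> bool" where
  "posop X \<longleftrightarrow> sa X \<and> (\<forall>x. 0 \<le> inner (X x) x)"

lemma quad_nonneg_disc:
  fixes a b c :: real
  assumes "\<And>t. 0 \<le> a + 2 * t * b + t^2 * c" "0 \<le> c"
  shows "b^2 \<le> a * c"
proof (cases "c = 0")
  case True
  show ?thesis
  proof (cases "b = 0")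
    case False
    have "0 \<le> a + 2 * (-(a+1)/(2*b)) * b" using assms(1)[of "-(a+1)/(2*b)"] True by simp
    then have False using False by (simp add: field_simps)
    then show ?thesis ..
  qed (use True assms(1)[of 0] in simp)
next
  case False
  then have c: "c > 0" using assms(2) by simp
  have "0 \<le> a + 2 * (-b/c) * b + (-b/c)^2 * c" by (rule assms(1))
  then have "0 \<le> a - b^2 / c" using c by (simp add: power2_eq_square field_simps)
  then show ?thesis using c by (simp add: field_simps)
qed

lemma posop_CS:
  assumes "posop X"
  shows "(inner (X x) y)^2 \<le> inner (X x) x * inner (X y) y"
proof -
  have bl: "bounded_linear X" and sy: "\<And>x y. inner (X x) y = inner x (X y)"
    and ps: "\<And>x. 0 \<le> inner (X x) x"
    using assms unfolding posop_def sa_def by auto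
  interpret bounded_linear X by fact
  have "0 \<le> inner (X x) x + 2 * t * inner (X x) y + t^2 * inner (X y) y" for t
  proof -
    have "0 \<le> inner (X (x + t *\<^sub>R y)) (x + t *\<^sub>R y)" by (rule ps)
    also have "\<dots> = inner (X x) x + t * inner (X x) y + t * inner (X y) x + t^2 * inner (X y) y"
      by (simp add: add scale inner_add inner_commute power2_eq_square algebra_simps)
    also have "inner (X y) x = inner (X x) y" using sy by (simp add: inner_commute)
    finally show ?thesis by simp
  qed
  then show ?thesis by (rule quad_nonneg_disc) (rule ps)
qed

lemma posop_zero:
  assumes "posop X" "inner (X x) x = 0"
  shows "X x = 0"
proof -
  have "(inner (X x) (X x))^2 \<le> 0" using posop_CS[OF assms(1), of x "X x"] assms(2) by simp
  then show ?thesis by simp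
qed

definition pB :: "real poly \<Rightarrow> ('b::real_vector \<Rightarrow> 'b) \<Rightarrow> 'b \<Rightarrow> 'b" where
  "pB p B x = (\<Sum>k\<le>degree p. coeff p k *\<^sub>R (B ^^ k) x)"

lemma pB_upto:
  assumes "degree p \<le> n"
  shows "pB p B x = (\<Sum>k\<le>n. coeff p k *\<^sub>R (B ^^ k) x)"
  unfolding pB_def
  by (rule sum.mono_neutral_left) (use assms in \<open>auto simp: coeff_eq_0\<close>)

lemma pB_add: "pB (p + q) B x = pB p B x + pB q B x"
proof -
  define n where "n = max (degree p) (degree q)"
  have "degree (p + q) \<le> n" "degree p \<le> n" "degree q \<le> n"
    by (auto simp: n_def degree_add_le)
  then show ?thesis by (simp add: pB_upto[of _ n] scaleR_add_left sum.distrib)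
qed

lemma pB_smult: "pB (smult c p) B x = c *\<^sub>R pB p B x"
proof -
  have "degree (smult c p) \<le> degree p" by (rule degree_smult_le)
  then show ?thesis by (simp add: pB_upto[of _ "degree p"] scaleR_sum_right pB_def)
qed

lemma pB_minus: "pB (- p) B x = - pB p B x"
  using pB_smult[of "-1" p B x] by simp

lemma pB_diff: "pB (p - q) B x = pB p B x - pB q B x"
  using pB_add[of p "-q" B x] pB_minus[of q B x] by simp

lemma pB_0 [simp]: "pB 0 B x = 0"
  by (simp add: pB_def)

lemma pB_const [simp]: "pB [:c:] B x = c *\<^sub>R x"
  by (simp add: pB_def)

lemma pB_1 [simp]: "pB 1 B x = x"
  using pB_const[of 1] by (simp add: one_pCons)

lemma funpow_bl:
  fixes B :: "'b::real_normed_vector \<Rightarrow> 'b"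
  assumes "bounded_linear B" shows "bounded_linear (B ^^ k)"
proof (induct k)
  case 0
  have "(B ^^ 0) = (\<lambda>x. x)" by (rule ext) simp
  then show ?case using bounded_linear_ident by metis
next
  case (Suc k)
  have "bounded_linear (\<lambda>x. B ((B ^^ k) x))" using bounded_linear_compose[OF assms Suc] .
  then show ?case by (simp add: comp_def)
qed

lemma pB_pCons:
  assumes "linear B"
  shows "pB (pCons a p) B x = a *\<^sub>R x + B (pB p B x)"
proof -
  have d: "degree (pCons a p) \<le> Suc (degree p)" by (rule degree_pCons_le)
  have "pB (pCons a p) B x = (\<Sum>k\<le>Suc (degree p). coeff (pCons a p) k *\<^sub>R (B ^^ k) x)"
    by (rule pB_upto[OF d])
  also have "\<dots> = a *\<^sub>R x + (\<Sum>k\<le>degree p. coeff p k *\<^sub>R (B ^^ Suc k) x)"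
    by (subst sum.atMost_Suc_shift) simp
  also have "(\<Sum>k\<le>degree p. coeff p k *\<^sub>R (B ^^ Suc k) x) = B (pB p B x)"
    unfolding pB_def using assms
    by (simp add: linear_sum[OF assms] linear_scale[OF assms] comp_def)
  finally show ?thesis .
qed

lemma pB_mult:
  assumes "linear B"
  shows "pB (p * q) B x = pB p B (pB q B x)"
proof (induct p arbitrary: x)
  case 0 then show ?case by simp
next
  case (pCons a p)
  have "pB (pCons a p * q) B x = pB (smult a q + pCons 0 (p * q)) B x" by simp
  also have "\<dots> = a *\<^sub>R pB q B x + B (pB (p * q) B x)"
    by (simp add: pB_add pB_smult pB_pCons[OF assms])
  also have "\<dots> = pB (pCons a p) B (pB q B x)"
    using pCons by (simp add: pB_pCons[OF assms])
  finally show ?case .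
qed

lemma pB_X: "pB [:0, 1:] B x = B x"
  by (simp add: pB_def)

lemma pB_bl:
  assumes "bounded_linear B" shows "bounded_linear (pB p B)"
proof -
  have "bounded_linear (\<lambda>x. \<Sum>k\<le>degree p. coeff p k *\<^sub>R (B ^^ k) x)"
    by (intro bounded_linear_sum bounded_linear_compose[OF bounded_linear_scaleR_right funpow_bl] assms)
  then show ?thesis unfolding pB_def[abs_def] .
qed

lemma funpow_sym:
  fixes B :: "'b::real_inner \<Rightarrow> 'b"
  assumes "\<And>x y. inner (B x) y = inner x (B y)"
  shows "inner ((B ^^ k) x) y = inner x ((B ^^ k) y)"
proof (induct k arbitrary: x y)
  case 0 then show ?case by simp
next
  case (Suc k)
  have "inner ((B ^^ Suc k) x) y = inner (B ((B ^^ k) x)) y" by simp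
  also have "\<dots> = inner ((B ^^ k) x) (B y)" by (rule assms)
  also have "\<dots> = inner x ((B ^^ k) (B y))" by (rule Suc)
  also have "(B ^^ k) (B y) = (B ^^ Suc k) y" by (simp add: funpow_Suc_right del: funpow.simps)
  finally show ?case .
qed

lemma pB_sa:
  assumes "sa B" shows "sa (pB p B)"
  unfolding sa_def
proof (intro conjI allI)
  show "bounded_linear (pB p B)" using assms pB_bl sa_def by blast
  fix x y
  show "inner (pB p B x) y = inner x (pB p B y)"
    unfolding pB_def using funpow_sym[of B] assms
    by (simp add: inner_sum_left inner_sum_right sa_def)
qed

lemma pB_commute:
  assumes "linear C" "\<And>x. B (C x) = C (B x)"
  shows "pB p B (C x) = C (pB p B x)"
proof -
  have "(B ^^ k) (C x) = C ((B ^^ k) x)" for k x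
    by (induct k) (auto simp: assms)
  then show ?thesis unfolding pB_def
    by (simp add: linear_sum[OF assms(1)] linear_scale[OF assms(1)])
qed

lemma near_pos:
  fixes f :: "real \<Rightarrow> real"
  assumes "isCont f r" "f r > 0"
  shows "\<exists>d>0. \<forall>y. \<bar>y - r\<bar> < d \<longrightarrow> f y > 0"
proof -
  obtain d where d: "d > 0" "\<And>y. dist y r < d \<Longrightarrow> dist (f y) (f r) < f r"
    using assms(1)[unfolded continuous_at_eps_delta] assms(2) by blast
  show ?thesis
  proof (intro exI[of _ d] conjI allI impI)
    fix y assume "\<bar>y - r\<bar> < d"
    then have "dist (f y) (f r) < f r" using d by (simp add: dist_real_def)
    then show "f y > 0" by (simp add: dist_real_def abs_less_iff)
  qed (use d in auto)
qed

lemma poly_nonneg_ext: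
  fixes p :: "real poly"
  assumes "\<And>t. t \<in> {-1..1} \<Longrightarrow> t \<noteq> r \<Longrightarrow> poly p t \<ge> 0"
  shows "\<And>t. t \<in> {-1..1} \<Longrightarrow> poly p t \<ge> 0"
proof -
  fix t :: real assume t: "t \<in> {-1..1}"
  show "poly p t \<ge> 0"
  proof (cases "t = r")
    case True
    show ?thesis
    proof (rule ccontr)
      assume "\<not> poly p t \<ge> 0"
      then have "(\<lambda>y. - poly p y) t > 0" by simp
      moreover have "isCont (\<lambda>y. - poly p y) t" by simp
      ultimately obtain d where d: "d > 0" "\<And>y. \<bar>y - t\<bar> < d \<Longrightarrow> - poly p y > 0"
        using near_pos by blast
      define e where "e = min (d/2) (1/2)"
      define y where "y = (if t \<le> 0 then t + e else t - e)"
      have e: "e > 0" "e < d" "e \<le> 1/2" using d by (auto simp: e_def)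
      have "y \<in> {-1..1}" "y \<noteq> r" "\<bar>y - t\<bar> < d" using t e True by (auto simp: y_def)
      then show False using assms d by fastforce
    qed
  qed (use assms t in auto)
qed

inductive good :: "real poly \<Rightarrow> bool" where
  g1: "good (s * s)"
| g2: "good (s * s * [:1, 1:])"
| g3: "good (s * s * [:1, -1:])"
| g4: "good (s * s * [:1, 0, -1:])"
| gadd: "good p \<Longrightarrow> good q \<Longrightarrow> good (p + q)"

lemma good_sq: "good p \<Longrightarrow> good (s * s * p)"
proof (induct p rule: good.induct)
  case (g1 t) then show ?case using good.g1[of "s * t"] by (simp add: algebra_simps)
next
  case (g2 t) then show ?case using good.g2[of "s * t"] by (simp add: algebra_simps)
next
  case (g3 t) then show ?case using good.g3[of "s * t"] by (simp add: algebra_simps)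
next
  case (g4 t) then show ?case using good.g4[of "s * t"] by (simp add: algebra_simps)
next
  case (gadd p q) then show ?case using good.gadd by (simp add: algebra_simps)
qed

lemma good_const: "c \<ge> 0 \<Longrightarrow> good [:c:]"
  using good.g1[of "[:sqrt c:]"] by (simp add: real_sqrt_mult[symmetric])

lemma good_smult: "c \<ge> 0 \<Longrightarrow> good p \<Longrightarrow> good (smult c p)"
  using good_sq[of p "[:sqrt c:]"] by (simp add: real_sqrt_mult[symmetric])

lemma good_0: "good 0"
  using good.g1[of 0] by simp

lemma pp1: "[:1, 1:] * [:1, -1:] = ([:1, 0, -1:] :: real poly)" by simp
lemma pp2: "[:1, 1:] * [:1, 0, -1:] = [:1, 1:] * [:1, 1:] * ([:1, -1:] :: real poly)" by simp
lemma pp3: "[:1, -1:] * [:1, 0, -1:] = [:1, -1:] * [:1, -1:] * ([:1, 1:] :: real poly)" by simp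

lemma good_lp: "good p \<Longrightarrow> good ([:1, 1:] * p)"
proof (induct p rule: good.induct)
  case (g1 t) then show ?case using good.g2[of t] by (simp add: algebra_simps)
next
  case (g2 t) then show ?case using good.g1[of "t * [:1,1:]"] by (simp add: algebra_simps)
next
  case (g3 t)
  have "[:1, 1:] * (t * t * [:1, -1:]) = t * t * ([:1, 1:] * [:1, -1:])" by (simp only: ac_simps)
  then have eq: "[:1, 1:] * (t * t * [:1, -1:]) = t * t * [:1, 0, -1:]" by (simp only: pp1)
  show ?case unfolding eq by (rule good.g4)
next
  case (g4 t)
  have "[:1, 1:] * (t * t * [:1, 0, -1:]) = t * t * ([:1, 1:] * [:1, 0, -1:])" by (simp only: ac_simps)
  also have "\<dots> = (t * [:1,1:]) * (t * [:1,1:]) * [:1, -1:]" by (simp only: pp2 ac_simps)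
  finally have eq: "[:1, 1:] * (t * t * [:1, 0, -1:]) = (t * [:1,1:]) * (t * [:1,1:]) * [:1, -1:]" .
  show ?case unfolding eq by (rule good.g3)
next
  case (gadd p q) then show ?case using good.gadd[of "[:1,1:]*p" "[:1,1:]*q"] good.gadd[of "[:1,-1:]*p" "[:1,-1:]*q"] by (simp only: distrib_left)
qed

lemma good_lm: "good p \<Longrightarrow> good ([:1, -1:] * p)"
proof (induct p rule: good.induct)
  case (g1 t) then show ?case using good.g3[of t] by (simp add: algebra_simps)
next
  case (g2 t)
  have "[:1, -1:] * (t * t * [:1, 1:]) = t * t * ([:1, 1:] * [:1, -1:])" by (simp only: ac_simps)
  then have eq: "[:1, -1:] * (t * t * [:1, 1:]) = t * t * [:1, 0, -1:]" by (simp only: pp1)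
  show ?case unfolding eq by (rule good.g4)
next
  case (g3 t) then show ?case using good.g1[of "t * [:1,-1:]"] by (simp add: algebra_simps)
next
  case (g4 t)
  have "[:1, -1:] * (t * t * [:1, 0, -1:]) = t * t * ([:1, -1:] * [:1, 0, -1:])" by (simp only: ac_simps)
  also have "\<dots> = (t * [:1,-1:]) * (t * [:1,-1:]) * [:1, 1:]" by (simp only: pp3 ac_simps)
  finally have eq: "[:1, -1:] * (t * t * [:1, 0, -1:]) = (t * [:1,-1:]) * (t * [:1,-1:]) * [:1, 1:]" .
  show ?case unfolding eq by (rule good.g2)
next
  case (gadd p q) then show ?case using good.gadd[of "[:1,1:]*p" "[:1,1:]*q"] good.gadd[of "[:1,-1:]*p" "[:1,-1:]*q"] by (simp only: distrib_left)
qed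

lemma mp_add: "map_poly complex_of_real (p + q) = map_poly complex_of_real p + map_poly complex_of_real q"
  by (rule poly_eqI) (simp add: coeff_map_poly)

lemma mp_smult: "map_poly complex_of_real (smult a q) = smult (complex_of_real a) (map_poly complex_of_real q)"
  by (rule poly_eqI) (simp add: coeff_map_poly)

lemma mp_mult: "map_poly complex_of_real (p * q) = map_poly complex_of_real p * map_poly complex_of_real q"
proof (induct p)
  case 0 then show ?case by simp
next
  case (pCons a p)
  have "map_poly complex_of_real (pCons a p * q) = map_poly complex_of_real (smult a q + pCons 0 (p * q))" by simp
  also have "\<dots> = smult (complex_of_real a) (map_poly complex_of_real q) + pCons 0 (map_poly complex_of_real p * map_poly complex_of_real q)"
    by (simp add: mp_add mp_smult map_poly_pCons pCons.hyps)
  also have "\<dots> = map_poly complex_of_real (pCons a p) * map_poly complex_of_real q"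
    by (simp add: map_poly_pCons)
  finally show ?case .
qed

lemma ev_real: "poly (map_poly complex_of_real p) (complex_of_real x) = complex_of_real (poly p x)"
  by (induct p) (auto simp: map_poly_pCons)

lemma degree_lin: "degree r \<le> 1 \<Longrightarrow> r = [:coeff r 0, coeff r 1:]"
  by (rule poly_eqI) (auto simp: coeff_pCons coeff_eq_0 split: nat.splits)

lemma quad_dvd:
  fixes q :: "real poly" and z :: complex
  assumes root: "poly (map_poly complex_of_real q) z = 0" and im: "Im z \<noteq> 0"
  shows "[:(Re z)^2 + (Im z)^2, -2 * Re z, 1:] dvd q"
proof -
  define d where "d = [:(Re z)^2 + (Im z)^2, -2 * Re z, 1:]"
  have d0: "d \<noteq> 0" and dd: "degree d = 2" by (auto simp: d_def)
  define r where "r = q mod d"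
  define s where "s = q div d"
  have qe: "q = d * s + r" unfolding r_def s_def by simp
  have dz: "poly (map_poly complex_of_real d) z = 0"
  proof -
    have "poly (map_poly complex_of_real d) z = complex_of_real ((Re z)^2 + (Im z)^2) - 2 * complex_of_real (Re z) * z + z * z"
      by (simp add: d_def map_poly_pCons algebra_simps)
    also have "\<dots> = 0" by (simp add: complex_eq_iff power2_eq_square algebra_simps)
    finally show ?thesis .
  qed
  have rz: "poly (map_poly complex_of_real r) z = 0"
  proof -
    have "poly (map_poly complex_of_real q) z = poly (map_poly complex_of_real d) z * poly (map_poly complex_of_real s) z + poly (map_poly complex_of_real r) z"
      by (subst qe) (simp add: mp_add mp_mult)
    then show ?thesis using root dz by simp
  qed
  have "degree r \<le> 1"
    using degree_mod_less[OF d0, of q] dd unfolding r_def by auto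
  then have rl: "r = [:coeff r 0, coeff r 1:]" by (rule degree_lin)
  have "complex_of_real (coeff r 0) + complex_of_real (coeff r 1) * z = 0"
    using rz by (subst (asm) rl) (simp add: map_poly_pCons algebra_simps)
  then have "coeff r 0 + coeff r 1 * Re z = 0" "coeff r 1 * Im z = 0"
    by (auto simp: complex_eq_iff)
  then have "coeff r 1 = 0" "coeff r 0 = 0" using im by auto
  then have "r = 0" using rl by simp
  then show ?thesis unfolding d_def[symmetric] using qe by simp
qed

lemma nonneg_good:
  fixes q :: "real poly"
  assumes "\<And>t. t \<in> {-1..1} \<Longrightarrow> poly q t \<ge> 0"
  shows "good q"
  using assms
proof (induct "degree q" arbitrary: q rule: less_induct)
  case less
  show ?case
  proof (cases "degree q = 0")
    case True
    then obtain c where c: "q = [:c:]" by (metis degree_eq_zeroE)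
    have "poly q 0 \<ge> 0" by (rule less.prems) simp
    then have "c \<ge> 0" using c by simp
    then show ?thesis using c good_const by simp
  next
    case False
    then have q0: "q \<noteq> 0" by auto
    show ?thesis
    proof (cases "\<exists>r. poly q r = 0")
      case True
      then obtain r where "poly q r = 0" by blast
      then obtain q1 where q1: "q = [:-r, 1:] * q1" using poly_eq_0_iff_dvd dvd_def by metis
      have q10: "q1 \<noteq> 0" using q0 q1 by auto
      have dq1: "degree q1 < degree q" using q1 q10 by (simp add: degree_mult_eq del: mult_pCons_left)
      have pq: "poly q t = (t - r) * poly q1 t" for t
      proof -
        have "poly q t = poly ([:-r, 1:] * q1) t" using q1 by (simp only:)
        also have "\<dots> = (t - r) * poly q1 t" by (simp only: poly_mult) (simp add: algebra_simps)
        finally show ?thesis .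
      qed
      consider "r \<le> -1" | "r \<ge> 1" | "-1 < r \<and> r < 1" by linarith
      then show ?thesis
      proof cases
        case 1
        have "poly q1 t \<ge> 0" if "t \<in> {-1..1}" "t \<noteq> r" for t
        proof -
          have "t - r > 0" using 1 that by auto
          moreover have "(t - r) * poly q1 t \<ge> 0" using less.prems[OF that(1)] pq by simp
          ultimately show ?thesis by (simp add: zero_le_mult_iff)
        qed
        then have "good q1" using less.hyps[OF dq1] poly_nonneg_ext by blast
        moreover have "q = [:1, 1:] * q1 + smult (-r - 1) q1"
          by (rule poly_eq_poly_eq_iff[THEN iffD1], rule ext) (simp add: pq algebra_simps)
        moreover have "good ([:1, 1:] * q1)" using \<open>good q1\<close> by (rule good_lp)
        moreover have "good (smult (-r - 1) q1)" using 1 \<open>good q1\<close> by (intro good_smult) auto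
        ultimately show ?thesis using good.gadd by metis
      next
        case 2
        have "poly (-q1) t \<ge> 0" if "t \<in> {-1..1}" "t \<noteq> r" for t
        proof -
          have "t - r < 0" using 2 that by auto
          moreover have "(t - r) * poly q1 t \<ge> 0" using less.prems[OF that(1)] pq by simp
          ultimately show ?thesis by (simp add: mult_le_0_iff zero_le_mult_iff)
        qed
        moreover have "degree (-q1) < degree q" using dq1 by simp
        ultimately have "good (-q1)" using less.hyps poly_nonneg_ext[where r=r and p="-q1"] by blast
        moreover have "q = [:1, -1:] * (-q1) + smult (r - 1) (-q1)"
          by (rule poly_eq_poly_eq_iff[THEN iffD1], rule ext) (simp add: pq algebra_simps)
        moreover have "good ([:1, -1:] * (-q1))" using \<open>good (-q1)\<close> by (rule good_lm)
        moreover have "good (smult (r - 1) (-q1))" using 2 \<open>good (-q1)\<close> by (intro good_smult) auto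
        ultimately show ?thesis using good.gadd by metis
      next
        case 3
        have isc: "isCont (poly q1) r" by simp
        have "poly q1 r = 0"
        proof (rule ccontr)
          assume ne: "poly q1 r \<noteq> 0"
          show False
          proof (cases "poly q1 r > 0")
            case True
            then obtain d where d: "d > 0" "\<And>y. \<bar>y - r\<bar> < d \<Longrightarrow> poly q1 y > 0"
              using near_pos[OF isc] by blast
            define y where "y = r - min (d/2) ((r+1)/2)"
            have "y \<in> {-1..1}" "y < r" "\<bar>y - r\<bar> < d" using 3 d by (auto simp: y_def min_def field_simps)
            then have "poly q y < 0" using d pq by (simp add: mult_neg_pos)
            then show False using less.prems \<open>y \<in> {-1..1}\<close> by fastforce
          next
            case False
            then have "(\<lambda>y. - poly q1 y) r > 0" using ne by simp
            moreover have "isCont (\<lambda>y. - poly q1 y) r" by simp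
            ultimately obtain d where d: "d > 0" "\<And>y. \<bar>y - r\<bar> < d \<Longrightarrow> - poly q1 y > 0"
              using near_pos by blast
            define y where "y = r + min (d/2) ((1-r)/2)"
            have "y \<in> {-1..1}" "y > r" "\<bar>y - r\<bar> < d" using 3 d by (auto simp: y_def min_def field_simps)
            then have "poly q y < 0" using d(2)[of y] pq by (simp add: mult_pos_neg)
            then show False using less.prems \<open>y \<in> {-1..1}\<close> by fastforce
          qed
        qed
        then obtain q2 where q2: "q1 = [:-r, 1:] * q2" using poly_eq_0_iff_dvd dvd_def by metis
        have q20: "q2 \<noteq> 0" using q10 q2 by auto
        have dq2: "degree q2 < degree q" using dq1 q2 q20 by (simp add: degree_mult_eq del: mult_pCons_left)
        have "poly q2 t \<ge> 0" if "t \<in> {-1..1}" "t \<noteq> r" for t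
        proof -
          have "t - r \<noteq> 0" using that by simp
          then have "(t - r) * (t - r) > 0" by (cases "t < r") (auto simp: zero_less_mult_iff)
          moreover have "((t - r) * (t - r)) * poly q2 t \<ge> 0" using less.prems[OF that(1)] pq q2 by (simp add: algebra_simps)
          ultimately show ?thesis by (simp add: zero_le_mult_iff)
        qed
        then have "good q2" using less.hyps[OF dq2] poly_nonneg_ext by blast
        then have "good ([:-r,1:] * [:-r,1:] * q2)" by (rule good_sq)
        moreover have "q = [:-r,1:] * [:-r,1:] * q2" using q1 q2 by (simp only: mult.assoc)
        ultimately show ?thesis by simp
      qed
    next
      case False
      have "\<exists>z. poly (map_poly complex_of_real q) z = 0"
      proof (rule fundamental_theorem_of_algebra)
        have "degree (map_poly complex_of_real q) = degree q" by (rule degree_map_poly) simp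
        then show "\<not> constant (poly (map_poly complex_of_real q))"
          using constant_degree \<open>degree q \<noteq> 0\<close> by metis
      qed
      then obtain z where z: "poly (map_poly complex_of_real q) z = 0" by blast
      have im: "Im z \<noteq> 0"
      proof
        assume "Im z = 0"
        then have "z = complex_of_real (Re z)" by (simp add: complex_eq_iff)
        then have "complex_of_real (poly q (Re z)) = 0" using z ev_real by metis
        then show False using False by simp
      qed
      define a where "a = Re z"
      define b where "b = Im z"
      obtain q1 where q1: "q = [:a^2 + b^2, -2 * a, 1:] * q1"
        using quad_dvd[OF z im] unfolding a_def b_def dvd_def by blast
      have q10: "q1 \<noteq> 0" using q0 q1 by auto
      have dq1: "degree q1 < degree q" using q1 q10 by (simp add: degree_mult_eq del: mult_pCons_left)
      have dpos: "poly [:a^2 + b^2, -2 * a, 1:] t > 0" for t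
      proof -
        have "poly [:a^2 + b^2, -2 * a, 1:] t = (t - a)^2 + b^2" by (simp add: power2_eq_square algebra_simps)
        moreover have "b^2 > 0" using im b_def by simp
        ultimately show ?thesis by (smt (verit) zero_le_power2)
      qed
      have "poly q1 t \<ge> 0" if "t \<in> {-1..1}" for t
      proof -
        have "poly q t = poly [:a^2 + b^2, -2 * a, 1:] t * poly q1 t" using q1 by (simp only: poly_mult)
        then have "poly [:a^2 + b^2, -2 * a, 1:] t * poly q1 t \<ge> 0" using less.prems[OF that] by simp
        then show ?thesis using dpos[of t] by (simp add: zero_le_mult_iff)
      qed
      then have g: "good q1" using less.hyps[OF dq1] by blast
      have "q = [:-a, 1:] * [:-a, 1:] * q1 + smult (b^2) q1"
        by (rule poly_eq_poly_eq_iff[THEN iffD1], rule ext) (simp add: q1 algebra_simps power2_eq_square)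
      moreover have "good ([:-a, 1:] * [:-a, 1:] * q1)" using g by (rule good_sq)
      moreover have "good (smult (b^2) q1)" using g by (intro good_smult) auto
      ultimately show ?thesis using good.gadd by metis
    qed
  qed
qed

lemma pB_lin: "bounded_linear B \<Longrightarrow> linear B"
  using bounded_linear.linear by blast

lemma pos_w1:
  assumes "sa B" "\<And>x. norm (B x) \<le> norm x"
  shows "0 \<le> inner (pB [:1, 1:] B y) y" "0 \<le> inner (pB [:1, -1:] B y) y"
    "0 \<le> inner (pB [:1, 0, -1:] B y) y"
proof -
  have bl: "bounded_linear B" using assms sa_def by blast
  interpret bounded_linear B by fact
  have lin: "linear B" by (rule pB_lin[OF bl])
  have cs: "\<bar>inner (B y) y\<bar> \<le> norm y * norm y"
    using Cauchy_Schwarz_ineq2[of "B y" y] assms(2)[of y] by (meson mult_right_mono norm_ge_zero order_trans)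
  have e1: "pB [:1, 1:] B y = y + B y" by (simp add: pB_pCons[OF lin])
  have e2: "pB [:1, -1:] B y = y - B y" by (simp add: pB_pCons[OF lin] linear_neg[OF lin])
  have e3: "pB [:1, 0, -1:] B y = y - B (B y)" by (simp add: pB_pCons[OF lin] linear_neg[OF lin] linear_0[OF lin])
  show "0 \<le> inner (pB [:1, 1:] B y) y"
    using cs by (simp add: e1 inner_add_left power2_norm_eq_inner[symmetric] power2_eq_square abs_le_iff)
  show "0 \<le> inner (pB [:1, -1:] B y) y"
    using cs by (simp add: e2 inner_diff_left power2_norm_eq_inner[symmetric] power2_eq_square abs_le_iff)
  have "inner (B (B y)) y = inner (B y) (B y)" using assms(1) sa_def by metis
  then show "0 \<le> inner (pB [:1, 0, -1:] B y) y"
    using assms(2)[of y] by (simp add: e3 inner_diff_left power2_norm_eq_inner[symmetric] power2_eq_square mult_mono)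
qed

lemma good_pos:
  assumes B: "sa B" "\<And>x. norm (B x) \<le> norm x" and g: "good p"
  shows "0 \<le> inner (pB p B x) x"
  using g
proof (induct p arbitrary: x rule: good.induct)
  have lin: "linear B" using B pB_lin sa_def by blast
  have sas: "\<And>s. sa (pB s B)" using B pB_sa by blast
  have key: "0 \<le> inner (pB (s * s * w) B x) x" if w: "\<And>y. 0 \<le> inner (pB w B y) y" for s w x
  proof -
    have "s * s * w = s * (w * s)" by (simp add: ac_simps)
    moreover have "pB (s * (w * s)) B x = pB s B (pB w B (pB s B x))" by (simp only: pB_mult[OF lin])
    ultimately have "pB (s * s * w) B x = pB s B (pB w B (pB s B x))" by metis
    then have "inner (pB (s * s * w) B x) x = inner (pB w B (pB s B x)) (pB s B x)"
      using sas[of s] sa_def by metis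
    then show ?thesis using w by simp
  qed
  {
    case (g1 s x) show ?case using key[of 1 s x] by simp
  next
    case (g2 s x) show ?case using key[of "[:1,1:]" s x] pos_w1[OF B] by blast
  next
    case (g3 s x) show ?case using key[of "[:1,-1:]" s x] pos_w1[OF B] by blast
  next
    case (g4 s x) show ?case using key[of "[:1,0,-1:]" s x] pos_w1[OF B] by blast
  next
    case (gadd p q x) then show ?case by (simp add: pB_add inner_add_left)
  }
qed

lemma poly_pos:
  assumes "sa B" "\<And>x. norm (B x) \<le> norm x" "\<And>t. t \<in> {-1..1} \<Longrightarrow> poly q t \<ge> 0"
  shows "0 \<le> inner (pB q B x) x"
  using good_pos[OF assms(1,2) nonneg_good[OF assms(3)]] .

definition cpx :: "('b::real_vector \<Rightarrow> 'b) \<Rightarrow> ('b \<Rightarrow> 'b) \<Rightarrow> 'b \<times> 'b \<Rightarrow> 'b \<times> 'b" where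
  "cpx X Y w = (X (fst w) - Y (snd w), X (snd w) + Y (fst w))"

lemma norm_pair_sq: "norm (a, b)^2 = norm a ^2 + norm b ^2"
  by (simp add: norm_Pair)

lemma cpx_poly_bound:
  fixes B :: "'b::real_inner \<Rightarrow> 'b"
  assumes B: "sa B" "\<And>x. norm (B x) \<le> norm x"
    and M: "M \<ge> 0" "\<And>t. t \<in> {-1..1} \<Longrightarrow> (poly u t)^2 + (poly v t)^2 \<le> M^2"
  shows "norm (cpx (pB u B) (pB v B) w) \<le> M * norm w"
proof -
  have lin: "linear B" using B pB_lin sa_def by blast
  define U where "U = pB u B"
  define V where "V = pB v B"
  have saU: "sa U" and saV: "sa V" using B pB_sa U_def V_def by blast+
  have symU: "\<And>x y. inner (U x) y = inner x (U y)" and symV: "\<And>x y. inner (V x) y = inner x (V y)"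
    using saU saV sa_def by blast+
  have comm: "U (V x) = V (U x)" for x
    unfolding U_def V_def by (simp add: pB_mult[OF lin, symmetric] mult.commute)
  define q where "q = [:M^2:] - u * u - v * v"
  have qpos: "poly q t \<ge> 0" if "t \<in> {-1..1}" for t
  proof -
    have "poly q t = M^2 - (poly u t)^2 - (poly v t)^2" by (simp add: q_def power2_eq_square)
    then show ?thesis using M(2)[OF that] by linarith
  qed
  have qx: "inner (pB q B x) x = M^2 * inner x x - inner (U x) (U x) - inner (V x) (V x)" for x
  proof -
    have "pB q B x = M^2 *\<^sub>R x - U (U x) - V (V x)"
      by (simp add: q_def pB_diff pB_mult[OF lin] U_def V_def)
    then show ?thesis by (simp add: inner_diff_left symU symV)
  qed
  have pq: "inner (U x) (U x) + inner (V x) (V x) \<le> M^2 * inner x x" for x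
    using poly_pos[OF B qpos, of x] qx[of x] by simp
  obtain x y where w: "w = (x, y)" by (cases w)
  have cross: "inner (U x) (V y) = inner (U y) (V x)"
  proof -
    have "inner (U x) (V y) = inner (V (U x)) y" by (simp add: symV)
    also have "\<dots> = inner (U (V x)) y" by (simp add: comm)
    also have "\<dots> = inner (V x) (U y)" by (simp add: symU)
    finally show ?thesis by (simp add: inner_commute)
  qed
  have "norm (cpx U V w)^2 = norm (U x - V y)^2 + norm (U y + V x)^2"
    by (simp add: cpx_def w norm_pair_sq)
  also have "\<dots> = (inner (U x) (U x) + inner (V x) (V x)) + (inner (U y) (U y) + inner (V y) (V y))"
    using cross by (simp add: power2_norm_eq_inner inner_diff inner_add inner_commute algebra_simps)
  also have "\<dots> \<le> M^2 * inner x x + M^2 * inner y y" using pq[of x] pq[of y] by simp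
  also have "\<dots> = (M * norm w)^2"
    by (simp add: w power_mult_distrib norm_pair_sq power2_norm_eq_inner algebra_simps)
  finally have "norm (cpx U V w)^2 \<le> (M * norm w)^2" .
  then show ?thesis unfolding U_def V_def using M(1) by (simp add: power2_le_iff_abs_le)
qed

lemma real_poly_bound:
  fixes B :: "'b::real_inner \<Rightarrow> 'b"
  assumes B: "sa B" "\<And>x. norm (B x) \<le> norm x"
    and M: "M \<ge> 0" "\<And>t. t \<in> {-1..1} \<Longrightarrow> \<bar>poly u t\<bar> \<le> M"
  shows "norm (pB u B x) \<le> M * norm x"
proof -
  have "\<And>t. t \<in> {-1..1} \<Longrightarrow> (poly u t)^2 + (poly 0 t)^2 \<le> M^2"
    using M by (simp add: abs_le_square_iff[symmetric] power2_le_iff_abs_le)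
  from cpx_poly_bound[OF B M(1) this, of "(x, 0)"]
  have "norm (pB u B x, pB u B 0) \<le> M * norm (x, 0::'b)" by (simp add: cpx_def)
  moreover have "pB u B 0 = 0" using pB_bl[of B u] B sa_def linear_0 bounded_linear.linear by blast
  ultimately show ?thesis by (simp add: norm_Pair)
qed

lemma poly_ring: "function_ring_on {f. \<exists>p::real poly. f = poly p} {-1..1::real}"
proof unfold_locales
  fix f assume "f \<in> {f. \<exists>p::real poly. f = poly p}"
  then show "continuous_on {-1..1} f" by (auto intro: continuous_intros)
next
  fix f g assume "f \<in> {f. \<exists>p::real poly. f = poly p}" "g \<in> {f. \<exists>p::real poly. f = poly p}"
  then obtain p q where "f = poly p" "g = poly q" by blast
  then show "(\<lambda>x. f x + g x) \<in> {f. \<exists>p::real poly. f = poly p}"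
    by (auto intro!: exI[of _ "p + q"])
  from \<open>f = poly p\<close> \<open>g = poly q\<close> show "(\<lambda>x. f x * g x) \<in> {f. \<exists>p::real poly. f = poly p}"
    by (auto intro!: exI[of _ "p * q"])
next
  fix c :: real show "(\<lambda>_. c) \<in> {f. \<exists>p::real poly. f = poly p}" by (auto intro!: exI[of _ "[:c:]"])
next
  fix x y :: real assume "x \<noteq> y"
  then show "\<exists>f\<in>{f. \<exists>p::real poly. f = poly p}. f x \<noteq> f y" by (intro bexI[of _ "poly [:0,1:]"]) auto
qed (simp)

lemma poly_approx_exists:
  fixes h :: "real \<Rightarrow> real"
  assumes "continuous_on {-1..1} h" "e > 0"
  shows "\<exists>p. \<forall>t\<in>{-1..1}. \<bar>poly p t - h t\<bar> \<le> e"
proof -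
  interpret function_ring_on "{f. \<exists>p::real poly. f = poly p}" "{-1..1::real}" by (rule poly_ring)
  obtain g where "g \<in> {f. \<exists>p::real poly. f = poly p}" "\<forall>x\<in>{-1..1}. \<bar>h x - g x\<bar> < e"
    using Stone_Weierstrass_basic[OF assms] by blast
  then obtain p where "\<forall>x\<in>{-1..1}. \<bar>h x - poly p x\<bar> < e" by blast
  then have "\<forall>x\<in>{-1..1}. \<bar>poly p x - h x\<bar> \<le> e" by (metis abs_minus_commute less_imp_le)
  then show ?thesis by blast
qed

definition papprox :: "(real \<Rightarrow> real) \<Rightarrow> nat \<Rightarrow> real poly" where
  "papprox h k = (SOME p. \<forall>t\<in>{-1..1}. \<bar>poly p t - h t\<bar> \<le> 1 / (real k + 1))"

lemma papprox_ok:
  assumes "continuous_on {-1..1} h" "t \<in> {-1..1}"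
  shows "\<bar>poly (papprox h k) t - h t\<bar> \<le> 1 / (real k + 1)"
proof -
  have "\<exists>p. \<forall>t\<in>{-1..1}. \<bar>poly p t - h t\<bar> \<le> 1 / (real k + 1)"
    by (rule poly_approx_exists[OF assms(1)]) simp
  then have "\<forall>t\<in>{-1..1}. \<bar>poly (papprox h k) t - h t\<bar> \<le> 1 / (real k + 1)"
    unfolding papprox_def by (rule someI_ex)
  then show ?thesis using assms(2) by blast
qed

definition rcalc :: "(real \<Rightarrow> real) \<Rightarrow> ('b::real_normed_vector \<Rightarrow> 'b) \<Rightarrow> 'b \<Rightarrow> 'b" where
  "rcalc h B x = lim (\<lambda>k. pB (papprox h k) B x)"

lemma lim_le_helper:
  fixes a :: "nat \<Rightarrow> 'b::real_normed_vector"
  assumes "a \<longlonglongrightarrow> L" "d \<longlonglongrightarrow> 0" "\<And>k. norm (c - a k) \<le> e + d k"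
  shows "norm (c - L) \<le> e"
proof -
  have l1: "(\<lambda>k. norm (c - a k)) \<longlonglongrightarrow> norm (c - L)" by (intro tendsto_intros assms)
  have l2: "(\<lambda>k. e + d k) \<longlonglongrightarrow> e" using tendsto_add[OF tendsto_const assms(2)] by simp
  show ?thesis by (rule tendsto_le[OF sequentially_bot l2 l1]) (simp add: assms(3))
qed

lemma cont_bounded:
  fixes h :: "real \<Rightarrow> real"
  assumes "continuous_on {-1..1::real} h"
  shows "\<exists>M\<ge>0. \<forall>t\<in>{-1..1}. \<bar>h t\<bar> \<le> M"
proof -
  have "compact (h ` {-1..1})" by (rule compact_continuous_image[OF assms]) simp
  then obtain M where "\<forall>y\<in>h ` {-1..1}. norm y \<le> M" using compact_imp_bounded bounded_iff by metis
  then show ?thesis by (intro exI[of _ "max M 0"]) auto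
qed

locale cb =
  fixes B :: "'b::{real_inner,complete_space} \<Rightarrow> 'b"
  assumes saB: "sa B" and contr: "\<And>x. norm (B x) \<le> norm x"
begin

lemma blB: "bounded_linear B" using saB sa_def by blast
lemma linB: "linear B" using blB bounded_linear.linear by blast
lemma pBlin: "linear (pB p B)" using pB_bl[OF blB] bounded_linear.linear by blast

lemma pB_diff_bound:
  assumes "\<And>t. t \<in> {-1..1} \<Longrightarrow> \<bar>poly p t - poly q t\<bar> \<le> e"
  shows "norm (pB p B x - pB q B x) \<le> e * norm x"
proof -
  have e: "e \<ge> 0" using assms[of 0] by auto
  have "norm (pB (p - q) B x) \<le> e * norm x"
    by (rule real_poly_bound[OF saB contr e]) (use assms in simp)
  then show ?thesis by (simp add: pB_diff)
qed

lemma rc_conv: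
  assumes h: "continuous_on {-1..1} h"
  shows "(\<lambda>k. pB (papprox h k) B x) \<longlonglongrightarrow> rcalc h B x"
proof -
  have "Cauchy (\<lambda>k. pB (papprox h k) B x)"
  proof (rule metric_CauchyI)
    fix e :: real assume e: "e > 0"
    obtain N :: nat where N: "2 * (norm x + 1) / e < real N" using reals_Archimedean2 by blast
    show "\<exists>N. \<forall>m\<ge>N. \<forall>n\<ge>N. dist (pB (papprox h m) B x) (pB (papprox h n) B x) < e"
    proof (intro exI[of _ N] allI impI)
      fix m n assume mn: "N \<le> m" "N \<le> n"
      have b: "\<bar>poly (papprox h m) t - poly (papprox h n) t\<bar> \<le> 2 / (real N + 1)" if "t \<in> {-1..1}" for t
      proof -
        have "\<bar>poly (papprox h m) t - h t\<bar> \<le> 1 / (real m + 1)" "\<bar>poly (papprox h n) t - h t\<bar> \<le> 1 / (real n + 1)"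
          using papprox_ok[OF h that] by auto
        moreover have "1 / (real m + 1) \<le> 1 / (real N + 1)" "1 / (real n + 1) \<le> 1 / (real N + 1)"
          using mn by (auto simp: frac_le)
        ultimately show ?thesis by linarith
      qed
      have "dist (pB (papprox h m) B x) (pB (papprox h n) B x) \<le> 2 / (real N + 1) * norm x"
        unfolding dist_norm by (rule pB_diff_bound) (rule b)
      also have "\<dots> < e"
      proof -
        have "2 * (norm x + 1) < e * real N" using N e by (simp add: field_simps)
        then have "2 * norm x < e * (real N + 1)" using e by (simp add: algebra_simps)
        then show ?thesis by (simp add: field_simps)
      qed
      finally show "dist (pB (papprox h m) B x) (pB (papprox h n) B x) < e" .
    qed
  qed
  then have "convergent (\<lambda>k. pB (papprox h k) B x)" using Cauchy_convergent_iff by blast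
  then show ?thesis unfolding rcalc_def by (simp add: convergent_LIMSEQ_iff)
qed

lemma rc_key:
  assumes h: "continuous_on {-1..1} h" and p: "\<And>t. t \<in> {-1..1} \<Longrightarrow> \<bar>poly p t - h t\<bar> \<le> e"
  shows "norm (pB p B x - rcalc h B x) \<le> e * norm x"
proof (rule lim_le_helper[OF rc_conv[OF h]])
  show "(\<lambda>k. 1 / (real k + 1) * norm x) \<longlonglongrightarrow> 0"
    using tendsto_mult[OF eps_lim tendsto_const[of "norm x"]] by simp
  fix k
  show "norm (pB p B x - pB (papprox h k) B x) \<le> e * norm x + 1 / (real k + 1) * norm x"
  proof -
    have "norm (pB p B x - pB (papprox h k) B x) \<le> (e + 1 / (real k + 1)) * norm x"
    proof (rule pB_diff_bound)
      fix t :: real assume t: "t \<in> {-1..1}"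
      show "\<bar>poly p t - poly (papprox h k) t\<bar> \<le> e + 1 / (real k + 1)"
        using p[OF t] papprox_ok[OF h t, of k] by linarith
    qed
    then show ?thesis by (simp add: algebra_simps)
  qed
qed

lemma rc_seq:
  assumes h: "continuous_on {-1..1} h" and d: "d \<longlonglongrightarrow> 0"
    and p: "\<And>k t. t \<in> {-1..1} \<Longrightarrow> \<bar>poly (p k) t - h t\<bar> \<le> d k"
  shows "(\<lambda>k. pB (p k) B x) \<longlonglongrightarrow> rcalc h B x"
proof -
  have "(\<lambda>k. d k * norm x) \<longlonglongrightarrow> 0" using tendsto_mult[OF d tendsto_const[of "norm x"]] by simp
  moreover have "norm (pB (p k) B x - rcalc h B x) \<le> d k * norm x" for k
    by (rule rc_key[OF h p])
  ultimately have "(\<lambda>k. pB (p k) B x - rcalc h B x) \<longlonglongrightarrow> 0"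
    by (intro Lim_null_comparison[of "\<lambda>k. pB (p k) B x - rcalc h B x" "\<lambda>k. d k * norm x" sequentially] always_eventually allI) auto
  then show ?thesis by (simp add: LIM_zero_iff)
qed

lemma rc_poly: "rcalc (poly p) B x = pB p B x"
  using rc_key[of "poly p" p 0 x] by (simp add: continuous_intros)

lemma rc_bound:
  assumes h: "continuous_on {-1..1} h" and M: "\<And>t. t \<in> {-1..1} \<Longrightarrow> \<bar>h t\<bar> \<le> M"
  shows "norm (rcalc h B x) \<le> M * norm x"
proof -
  have M0: "M \<ge> 0" using M[of 0] by auto
  have "norm (0 - rcalc h B x) \<le> M"
    if False for x :: 'b using that by simp
  have a: "norm (pB (papprox h k) B x) \<le> (M + 1 / (real k + 1)) * norm x" for k
  proof (rule real_poly_bound[OF saB contr])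
    show "0 \<le> M + 1 / (real k + 1)" using M0 by simp
    fix t :: real assume t: "t \<in> {-1..1}"
    show "\<bar>poly (papprox h k) t\<bar> \<le> M + 1 / (real k + 1)" using papprox_ok[OF h t, of k] M[OF t] by linarith
  qed
  have l1: "(\<lambda>k. norm (pB (papprox h k) B x)) \<longlonglongrightarrow> norm (rcalc h B x)" by (intro tendsto_intros rc_conv h)
  have l2: "(\<lambda>k. (M + 1 / (real k + 1)) * norm x) \<longlonglongrightarrow> M * norm x"
    using tendsto_mult[OF tendsto_add[OF tendsto_const[of M] eps_lim] tendsto_const[of "norm x"]] by simp
  show ?thesis by (rule tendsto_le[OF sequentially_bot l2 l1]) (simp add: a)
qed

lemma rc_congr:
  assumes h: "continuous_on {-1..1} h" and eq: "\<And>t. t \<in> {-1..1} \<Longrightarrow> g t = h t"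
  shows "rcalc g B x = rcalc h B x"
proof -
  have g: "continuous_on {-1..1} g" using h eq continuous_on_cong by (metis (no_types, lifting))
  have "(\<lambda>k. pB (papprox g k) B x) \<longlonglongrightarrow> rcalc h B x"
    by (rule rc_seq[OF h eps_lim]) (use papprox_ok[OF g] eq in auto)
  then show ?thesis using rc_conv[OF g] LIMSEQ_unique by blast
qed

lemma rc_add:
  assumes h: "continuous_on {-1..1} h" and g: "continuous_on {-1..1} g"
  shows "rcalc (\<lambda>t. h t + g t) B x = rcalc h B x + rcalc g B x"
proof -
  have hg: "continuous_on {-1..1} (\<lambda>t. h t + g t)" by (intro continuous_intros h g)
  have "(\<lambda>k. pB (papprox h k + papprox g k) B x) \<longlonglongrightarrow> rcalc (\<lambda>t. h t + g t) B x"
  proof (rule rc_seq[OF hg])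
    show "(\<lambda>k. 2 * (1 / (real k + 1))) \<longlonglongrightarrow> 0" using tendsto_mult[OF tendsto_const[of 2] eps_lim] by simp
    fix k and t :: real assume t: "t \<in> {-1..1}"
    show "\<bar>poly (papprox h k + papprox g k) t - (h t + g t)\<bar> \<le> 2 * (1 / (real k + 1))"
      using papprox_ok[OF h t, of k] papprox_ok[OF g t, of k] by simp
  qed
  moreover have "(\<lambda>k. pB (papprox h k + papprox g k) B x) \<longlonglongrightarrow> rcalc h B x + rcalc g B x"
    unfolding pB_add by (intro tendsto_add rc_conv h g)
  ultimately show ?thesis using LIMSEQ_unique by blast
qed

lemma rc_scale:
  assumes h: "continuous_on {-1..1} h"
  shows "rcalc (\<lambda>t. c * h t) B x = c *\<^sub>R rcalc h B x"
proof -
  have hc: "continuous_on {-1..1} (\<lambda>t. c * h t)" by (intro continuous_intros h)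
  have "(\<lambda>k. pB (smult c (papprox h k)) B x) \<longlonglongrightarrow> rcalc (\<lambda>t. c * h t) B x"
  proof (rule rc_seq[OF hc])
    show "(\<lambda>k. \<bar>c\<bar> * (1 / (real k + 1))) \<longlonglongrightarrow> 0" using tendsto_mult[OF tendsto_const[of "\<bar>c\<bar>"] eps_lim] by simp
    fix k and t :: real assume t: "t \<in> {-1..1}"
    have "\<bar>poly (smult c (papprox h k)) t - c * h t\<bar> = \<bar>c\<bar> * \<bar>poly (papprox h k) t - h t\<bar>"
      by (simp add: abs_mult[symmetric] algebra_simps)
    then show "\<bar>poly (smult c (papprox h k)) t - c * h t\<bar> \<le> \<bar>c\<bar> * (1 / (real k + 1))"
      using mult_left_mono[OF papprox_ok[OF h t, of k], of "\<bar>c\<bar>"] by simp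
  qed
  moreover have "(\<lambda>k. pB (smult c (papprox h k)) B x) \<longlonglongrightarrow> c *\<^sub>R rcalc h B x"
    unfolding pB_smult by (intro tendsto_scaleR tendsto_const rc_conv h)
  ultimately show ?thesis using LIMSEQ_unique by blast
qed

lemma rc_bl:
  assumes h: "continuous_on {-1..1} h"
  shows "bounded_linear (rcalc h B)"
proof -
  obtain M where M: "M \<ge> 0" "\<And>t. t \<in> {-1..1} \<Longrightarrow> \<bar>h t\<bar> \<le> M" using cont_bounded[OF h] by blast
  have add: "rcalc h B (x + y) = rcalc h B x + rcalc h B y" for x y
  proof -
    have "(\<lambda>k. pB (papprox h k) B (x + y)) \<longlonglongrightarrow> rcalc h B x + rcalc h B y"
      using tendsto_add[OF rc_conv[OF h, of x] rc_conv[OF h, of y]]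
      using linear_add[OF pBlin] by simp
    then show ?thesis using rc_conv[OF h, of "x + y"] LIMSEQ_unique by blast
  qed
  have sc: "rcalc h B (c *\<^sub>R x) = c *\<^sub>R rcalc h B x" for c x
  proof -
    have "(\<lambda>k. pB (papprox h k) B (c *\<^sub>R x)) \<longlonglongrightarrow> c *\<^sub>R rcalc h B x"
      using tendsto_scaleR[OF tendsto_const[of c] rc_conv[OF h, of x]]
      using linear_scale[OF pBlin] by simp
    then show ?thesis using rc_conv[OF h, of "c *\<^sub>R x"] LIMSEQ_unique by blast
  qed
  have bd: "\<And>x. norm (rcalc h B x) \<le> norm x * M" using rc_bound[OF h M(2)] by (simp add: mult.commute)
  show ?thesis by (rule bounded_linear_intro[OF add sc bd])
qed

lemma rc_sym:
  assumes h: "continuous_on {-1..1} h"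
  shows "inner (rcalc h B x) y = inner x (rcalc h B y)"
proof -
  have s: "inner (pB p B x) y = inner x (pB p B y)" for p using pB_sa[OF saB] sa_def by blast
  have "(\<lambda>k. inner (pB (papprox h k) B x) y) \<longlonglongrightarrow> inner (rcalc h B x) y" by (intro tendsto_intros rc_conv h)
  moreover have "(\<lambda>k. inner x (pB (papprox h k) B y)) \<longlonglongrightarrow> inner x (rcalc h B y)" by (intro tendsto_intros rc_conv h)
  ultimately show ?thesis unfolding s using LIMSEQ_unique by blast
qed

lemma rc_sa: "continuous_on {-1..1} h \<Longrightarrow> sa (rcalc h B)"
  unfolding sa_def using rc_bl rc_sym by blast

lemma rc_commute:
  assumes h: "continuous_on {-1..1} h" and C: "bounded_linear C" "\<And>x. B (C x) = C (B x)"
  shows "rcalc h B (C x) = C (rcalc h B x)"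
proof -
  have lC: "linear C" using C bounded_linear.linear by blast
  have "(\<lambda>k. C (pB (papprox h k) B x)) \<longlonglongrightarrow> C (rcalc h B x)"
    by (rule bounded_linear.tendsto[OF C(1) rc_conv[OF h]])
  moreover have "C (pB (papprox h k) B x) = pB (papprox h k) B (C x)" for k
    by (rule pB_commute[symmetric, OF lC]) (rule C(2))
  ultimately show ?thesis using rc_conv[OF h, of "C x"] LIMSEQ_unique by fastforce
qed

lemma rc_mult:
  assumes h: "continuous_on {-1..1} h" and g: "continuous_on {-1..1} g"
  shows "rcalc (\<lambda>t. h t * g t) B x = rcalc h B (rcalc g B x)"
proof -
  obtain Mh where Mh: "Mh \<ge> 0" "\<And>t. t \<in> {-1..1} \<Longrightarrow> \<bar>h t\<bar> \<le> Mh" using cont_bounded[OF h] by blast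
  obtain Mg where Mg: "Mg \<ge> 0" "\<And>t. t \<in> {-1..1} \<Longrightarrow> \<bar>g t\<bar> \<le> Mg" using cont_bounded[OF g] by blast
  have hg: "continuous_on {-1..1} (\<lambda>t. h t * g t)" by (intro continuous_intros h g)
  define e where "e = (\<lambda>k::nat. 1 / (real k + 1))"
  have e: "e \<longlonglongrightarrow> 0" "\<And>k. 0 \<le> e k" "\<And>k. e k \<le> 1" using eps_lim by (auto simp: e_def)
  have "(\<lambda>k. pB (papprox h k * papprox g k) B x) \<longlonglongrightarrow> rcalc (\<lambda>t. h t * g t) B x"
  proof (rule rc_seq[OF hg])
    show "(\<lambda>k. (Mh + 1 + Mg) * e k) \<longlonglongrightarrow> 0" using tendsto_mult[OF tendsto_const e(1)] by simp
    fix k and t :: real assume t: "t \<in> {-1..1}"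
    have a1: "\<bar>poly (papprox h k) t - h t\<bar> \<le> e k" "\<bar>poly (papprox g k) t - g t\<bar> \<le> e k"
      using papprox_ok[OF h t] papprox_ok[OF g t] by (auto simp: e_def)
    have a2: "\<bar>poly (papprox h k) t\<bar> \<le> Mh + 1" using a1 Mh(2)[OF t] e(3)[of k] by linarith
    have "\<bar>poly (papprox h k * papprox g k) t - h t * g t\<bar>
        = \<bar>poly (papprox h k) t * (poly (papprox g k) t - g t) + g t * (poly (papprox h k) t - h t)\<bar>"
      by (simp add: algebra_simps)
    also have "\<dots> \<le> \<bar>poly (papprox h k) t\<bar> * \<bar>poly (papprox g k) t - g t\<bar> + \<bar>g t\<bar> * \<bar>poly (papprox h k) t - h t\<bar>"
      by (simp add: abs_mult[symmetric] abs_triangle_ineq)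
    also have "\<dots> \<le> (Mh + 1) * e k + Mg * e k"
      using a1 a2 Mg(2)[OF t] by (intro add_mono mult_mono) auto
    finally show "\<bar>poly (papprox h k * papprox g k) t - h t * g t\<bar> \<le> (Mh + 1 + Mg) * e k"
      by (simp add: algebra_simps)
  qed
  moreover have "(\<lambda>k. pB (papprox h k * papprox g k) B x) \<longlonglongrightarrow> rcalc h B (rcalc g B x)"
  proof -
    have "(\<lambda>k. pB (papprox h k) B (pB (papprox g k) B x) - rcalc h B (rcalc g B x)) \<longlonglongrightarrow> 0"
    proof (rule Lim_null_comparison[rotated])
      show "(\<lambda>k. (Mh + 1) * norm (pB (papprox g k) B x - rcalc g B x) + e k * norm (rcalc g B x)) \<longlonglongrightarrow> 0"
      proof -
        have "(\<lambda>k. pB (papprox g k) B x - rcalc g B x) \<longlonglongrightarrow> 0" using rc_conv[OF g] by (simp add: LIM_zero_iff)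
        then have "(\<lambda>k. norm (pB (papprox g k) B x - rcalc g B x)) \<longlonglongrightarrow> 0" by (simp add: tendsto_norm_zero)
        from tendsto_mult[OF tendsto_const[of "Mh + 1"] this]
        have l1: "(\<lambda>k. (Mh + 1) * norm (pB (papprox g k) B x - rcalc g B x)) \<longlonglongrightarrow> 0" by simp
        have l2: "(\<lambda>k. e k * norm (rcalc g B x)) \<longlonglongrightarrow> 0"
          using tendsto_mult[OF e(1) tendsto_const[of "norm (rcalc g B x)"]] by simp
        show ?thesis using tendsto_add[OF l1 l2] by simp
      qed
      show "\<forall>\<^sub>F k in sequentially. norm (pB (papprox h k) B (pB (papprox g k) B x) - rcalc h B (rcalc g B x))
          \<le> (Mh + 1) * norm (pB (papprox g k) B x - rcalc g B x) + e k * norm (rcalc g B x)"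
      proof (intro always_eventually allI)
        fix k
        let ?a = "pB (papprox g k) B x" and ?b = "rcalc g B x"
        have eq: "pB (papprox h k) B ?a - rcalc h B ?b = pB (papprox h k) B (?a - ?b) + (pB (papprox h k) B ?b - rcalc h B ?b)"
          by (simp add: linear_diff[OF pBlin])
        have bA: "norm (pB (papprox h k) B (?a - ?b)) \<le> (Mh + 1) * norm (?a - ?b)"
        proof (rule real_poly_bound[OF saB contr])
          show "0 \<le> Mh + 1" using Mh by simp
          fix t :: real assume t: "t \<in> {-1..1}"
          show "\<bar>poly (papprox h k) t\<bar> \<le> Mh + 1"
            using papprox_ok[OF h t, of k] Mh(2)[OF t] e(3)[of k] unfolding e_def by linarith
        qed
        have bC: "norm (pB (papprox h k) B ?b - rcalc h B ?b) \<le> e k * norm ?b"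
          by (rule rc_key[OF h]) (use papprox_ok[OF h] in \<open>auto simp: e_def\<close>)
        have "norm (pB (papprox h k) B ?a - rcalc h B ?b) = norm (pB (papprox h k) B (?a - ?b) + (pB (papprox h k) B ?b - rcalc h B ?b))"
          by (simp only: eq)
        also have "\<dots> \<le> norm (pB (papprox h k) B (?a - ?b)) + norm (pB (papprox h k) B ?b - rcalc h B ?b)"
          by (rule norm_triangle_ineq)
        also have "\<dots> \<le> (Mh + 1) * norm (?a - ?b) + e k * norm ?b" using bA bC by (rule add_mono)
        finally show "norm (pB (papprox h k) B ?a - rcalc h B ?b) \<le> (Mh + 1) * norm (?a - ?b) + e k * norm ?b" .
      qed
    qed
    then show ?thesis by (simp add: LIM_zero_iff pB_mult[OF linB])
  qed
  ultimately show ?thesis using LIMSEQ_unique by blast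
qed

lemma rc_const: "rcalc (\<lambda>t. c) B x = c *\<^sub>R x"
proof -
  have "poly [:c:] = (\<lambda>t::real. c)" by (rule ext) simp
  then show ?thesis using rc_poly[of "[:c:]" x] by simp
qed

lemma rc_id: "rcalc (\<lambda>t. t) B x = B x"
proof -
  have "poly [:0, 1:] = (\<lambda>t::real. t)" by (rule ext) simp
  then show ?thesis using rc_poly[of "[:0, 1:]" x] by (simp add: pB_X)
qed

lemma rc_pos:
  assumes h: "continuous_on {-1..1} h" and nn: "\<And>t. t \<in> {-1..1} \<Longrightarrow> h t \<ge> 0"
  shows "posop (rcalc h B)"
proof -
  have s: "continuous_on {-1..1} (\<lambda>t. sqrt (h t))" by (intro continuous_intros h)
  have "rcalc h B x = rcalc (\<lambda>t. sqrt (h t) * sqrt (h t)) B x" for x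
    by (rule rc_congr[symmetric]) (use h nn in \<open>auto intro: continuous_intros\<close>)
  also have "\<dots> x = rcalc (\<lambda>t. sqrt (h t)) B (rcalc (\<lambda>t. sqrt (h t)) B x)" for x by (rule rc_mult[OF s s])
  finally have "inner (rcalc h B x) x = inner (rcalc (\<lambda>t. sqrt (h t)) B x) (rcalc (\<lambda>t. sqrt (h t)) B x)" for x
    using rc_sym[OF s] by metis
  then show ?thesis unfolding posop_def using rc_sa[OF h] by simp
qed

end

definition calc :: "(real \<Rightarrow> complex) \<Rightarrow> ('b::real_normed_vector \<Rightarrow> 'b) \<Rightarrow> 'b \<times> 'b \<Rightarrow> 'b \<times> 'b" where
  "calc h B w = cpx (rcalc (\<lambda>t. Re (h t)) B) (rcalc (\<lambda>t. Im (h t)) B) w"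

lemma cpx_bl:
  fixes X Y :: "'b::real_normed_vector \<Rightarrow> 'b"
  assumes "bounded_linear X" "bounded_linear Y"
  shows "bounded_linear (cpx X Y)"
proof -
  have "bounded_linear (\<lambda>w::'b \<times> 'b. (X (fst w) - Y (snd w), X (snd w) + Y (fst w)))"
    by (intro bounded_linear_Pair bounded_linear_sub bounded_linear_add
        bounded_linear_compose[OF assms(1) bounded_linear_fst] bounded_linear_compose[OF assms(1) bounded_linear_snd]
        bounded_linear_compose[OF assms(2) bounded_linear_fst] bounded_linear_compose[OF assms(2) bounded_linear_snd])
  then show ?thesis unfolding cpx_def[abs_def] .
qed

lemma cpx_ge:
  fixes X Y :: "'b::real_normed_vector \<Rightarrow> 'b"
  assumes "bounded_linear X" "bounded_linear Y"
  shows "onorm X \<le> onorm (cpx X Y)" "onorm Y \<le> onorm (cpx X Y)"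
proof -
  have bl: "bounded_linear (cpx X Y)" by (rule cpx_bl[OF assms])
  have X0: "X 0 = 0" and Y0: "Y 0 = 0" using assms linear_0 bounded_linear.linear by blast+
  have n: "norm (cpx X Y (x, 0)) \<le> onorm (cpx X Y) * norm x" for x
    using onorm[OF bl, of "(x, 0)"] by (simp add: norm_Pair)
  have c: "cpx X Y (x, 0) = (X x, Y x)" for x by (simp add: cpx_def X0 Y0)
  show "onorm X \<le> onorm (cpx X Y)"
  proof (rule onorm_bound)
    show "0 \<le> onorm (cpx X Y)" by (rule onorm_pos_le[OF bl])
    fix x
    have "norm (X x) \<le> norm (X x, Y x)" unfolding norm_Pair by (rule real_le_rsqrt) simp
    then show "norm (X x) \<le> onorm (cpx X Y) * norm x" using n[of x] c[of x] by simp
  qed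
  show "onorm Y \<le> onorm (cpx X Y)"
  proof (rule onorm_bound)
    show "0 \<le> onorm (cpx X Y)" by (rule onorm_pos_le[OF bl])
    fix x
    have "norm (Y x) \<le> norm (X x, Y x)" unfolding norm_Pair by (rule real_le_rsqrt) simp
    then show "norm (Y x) \<le> onorm (cpx X Y) * norm x" using n[of x] c[of x] by simp
  qed
qed

lemma norm_pair_le: "norm (a, b) \<le> norm (c, d)" if "norm a \<le> norm c" "norm b \<le> norm d"
  for a b c d :: "'b::real_normed_vector"
  using that by (simp add: norm_Pair) (meson add_mono norm_ge_zero power_mono)

lemma cpx_le:
  fixes X Y :: "'b::real_normed_vector \<Rightarrow> 'b"
  assumes "bounded_linear X" "bounded_linear Y"
  shows "onorm (cpx X Y) \<le> onorm X + onorm Y"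
proof (rule onorm_bound)
  show "0 \<le> onorm X + onorm Y" using onorm_pos_le[OF assms(1)] onorm_pos_le[OF assms(2)] by simp
  fix w :: "'b \<times> 'b"
  obtain x y where w: "w = (x, y)" by (cases w)
  have "cpx X Y w = (X x, X y) + (- Y y, Y x)" by (simp add: cpx_def w)
  then have "norm (cpx X Y w) \<le> norm (X x, X y) + norm (- Y y, Y x)" by (metis norm_triangle_ineq)
  also have "norm (X x, X y) \<le> norm (onorm X *\<^sub>R x, onorm X *\<^sub>R y)"
    by (rule norm_pair_le) (use onorm[OF assms(1)] onorm_pos_le[OF assms(1)] in auto)
  also have "norm (- Y y, Y x) \<le> norm (onorm Y *\<^sub>R y, onorm Y *\<^sub>R x)"
    by (rule norm_pair_le) (use onorm[OF assms(2)] onorm_pos_le[OF assms(2)] in auto)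
  also have "norm (onorm X *\<^sub>R x, onorm X *\<^sub>R y) = onorm X * norm w"
  proof -
    have "(onorm X *\<^sub>R x, onorm X *\<^sub>R y) = onorm X *\<^sub>R w" by (simp add: w)
    then show ?thesis using onorm_pos_le[OF assms(1)] by simp
  qed
  also have "norm (onorm Y *\<^sub>R y, onorm Y *\<^sub>R x) = onorm Y * norm w"
  proof -
    have e: "(onorm Y *\<^sub>R y, onorm Y *\<^sub>R x) = onorm Y *\<^sub>R (y, x)" by simp
    have "norm (onorm Y *\<^sub>R y, onorm Y *\<^sub>R x) = onorm Y * norm (y, x)"
      unfolding e using onorm_pos_le[OF assms(2)] by (metis abs_of_nonneg norm_scaleR)
    also have "norm (y, x) = norm w" by (simp add: w norm_Pair add.commute)
    finally show ?thesis by simp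
  qed
  finally show "norm (cpx X Y w) \<le> (onorm X + onorm Y) * norm w" by (simp add: algebra_simps)
qed

lemma cpx_diff: "cpx X Y w - cpx X' Y' w = cpx (\<lambda>x. X x - X' x) (\<lambda>x. Y x - Y' x) w"
  by (simp add: cpx_def algebra_simps)

context cb begin

lemma rc_diff:
  assumes h: "continuous_on {-1..1} h" and g: "continuous_on {-1..1} g"
  shows "rcalc (\<lambda>t. h t - g t) B x = rcalc h B x - rcalc g B x"
proof -
  have g': "continuous_on {-1..1} (\<lambda>t. (-1) * g t)" by (intro continuous_intros g)
  have "rcalc (\<lambda>t. h t - g t) B x = rcalc (\<lambda>t. h t + (-1) * g t) B x" by simp
  also have "\<dots> = rcalc h B x + rcalc (\<lambda>t. (-1) * g t) B x" by (rule rc_add[OF h g'])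
  also have "\<dots> = rcalc h B x - rcalc g B x" using rc_scale[OF g, of "-1" x] by simp
  finally show ?thesis .
qed

lemma calc_bl:
  assumes h: "continuous_on {-1..1} h"
  shows "bounded_linear (calc h B)"
proof -
  have "bounded_linear (cpx (rcalc (\<lambda>t. Re (h t)) B) (rcalc (\<lambda>t. Im (h t)) B))"
    by (intro cpx_bl rc_bl continuous_intros h)
  then show ?thesis unfolding calc_def[abs_def] .
qed

lemma calc_diff:
  assumes h: "continuous_on {-1..1} h" and g: "continuous_on {-1..1} g"
  shows "calc h B w - calc g B w = calc (\<lambda>t. h t - g t) B w"
proof -
  have c: "continuous_on {-1..1} (\<lambda>t. Re (h t))" "continuous_on {-1..1} (\<lambda>t. Re (g t))"
    "continuous_on {-1..1} (\<lambda>t. Im (h t))" "continuous_on {-1..1} (\<lambda>t. Im (g t))"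
    by (intro continuous_intros h g)+
  have e1: "rcalc (\<lambda>t. Re (h t - g t)) B = (\<lambda>x. rcalc (\<lambda>t. Re (h t)) B x - rcalc (\<lambda>t. Re (g t)) B x)"
    by (rule ext) (simp only: minus_complex.sel rc_diff[OF c(1,2)])
  have e2: "rcalc (\<lambda>t. Im (h t - g t)) B = (\<lambda>x. rcalc (\<lambda>t. Im (h t)) B x - rcalc (\<lambda>t. Im (g t)) B x)"
    by (rule ext) (simp only: minus_complex.sel rc_diff[OF c(3,4)])
  show ?thesis unfolding calc_def cpx_diff e1 e2 ..
qed

lemma calc_bound:
  assumes h: "continuous_on {-1..1} h" and M: "\<And>t. t \<in> {-1..1} \<Longrightarrow> cmod (h t) \<le> M"
  shows "norm (calc h B w) \<le> M * norm w"
proof -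
  have "cmod (h 0) \<le> M" by (rule M) simp
  then have M0: "M \<ge> 0" using norm_ge_zero[of "h 0"] by linarith
  have cr: "continuous_on {-1..1} (\<lambda>t. Re (h t))" and ci: "continuous_on {-1..1} (\<lambda>t. Im (h t))"
    by (intro continuous_intros h)+
  define p where "p k = papprox (\<lambda>t. Re (h t)) k" for k
  define q where "q k = papprox (\<lambda>t. Im (h t)) k" for k
  have b: "norm (cpx (pB (p k) B) (pB (q k) B) w) \<le> (M + 2 / (real k + 1)) * norm w" for k
  proof (rule cpx_poly_bound[OF saB contr])
    show "0 \<le> M + 2 / (real k + 1)" using M0 by simp
    fix t :: real assume t: "t \<in> {-1..1}"
    have a1: "\<bar>poly (p k) t - Re (h t)\<bar> \<le> 1 / (real k + 1)" unfolding p_def by (rule papprox_ok[OF cr t])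
    have a2: "\<bar>poly (q k) t - Im (h t)\<bar> \<le> 1 / (real k + 1)" unfolding q_def by (rule papprox_ok[OF ci t])
    define z where "z = Complex (poly (p k) t) (poly (q k) t)"
    have "cmod z \<le> cmod (h t) + cmod (z - h t)" by (rule norm_triangle_sub)
    also have "cmod (z - h t) \<le> \<bar>Re (z - h t)\<bar> + \<bar>Im (z - h t)\<bar>" by (rule cmod_le)
    finally have "cmod z \<le> M + 2 / (real k + 1)" using a1 a2 M[OF t] by (simp add: z_def)
    then have "cmod z ^ 2 \<le> (M + 2 / (real k + 1))^2" by (rule power_mono) simp
    moreover have "cmod z ^ 2 = (poly (p k) t)^2 + (poly (q k) t)^2" by (simp add: z_def cmod_def)
    ultimately show "(poly (p k) t)^2 + (poly (q k) t)^2 \<le> (M + 2 / (real k + 1))^2" by simp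
  qed
  obtain x y where w: "w = (x, y)" by (cases w)
  have lim: "(\<lambda>k. cpx (pB (p k) B) (pB (q k) B) w) \<longlonglongrightarrow> calc h B w"
    unfolding calc_def cpx_def w p_def q_def fst_conv snd_conv
    by (intro tendsto_Pair tendsto_diff tendsto_add rc_conv cr ci)
  have l1: "(\<lambda>k. norm (cpx (pB (p k) B) (pB (q k) B) w)) \<longlonglongrightarrow> norm (calc h B w)" by (intro tendsto_intros lim)
  have l2: "(\<lambda>k. (M + 2 / (real k + 1)) * norm w) \<longlonglongrightarrow> M * norm w"
    using tendsto_mult[OF tendsto_add[OF tendsto_const[of M] tendsto_mult[OF tendsto_const[of 2] eps_lim]] tendsto_const[of "norm w"]]
    by simp
  show ?thesis by (rule tendsto_le[OF sequentially_bot l2 l1]) (simp add: b)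
qed

lemma calc_onorm:
  assumes h: "continuous_on {-1..1} h" and M: "\<And>t. t \<in> {-1..1} \<Longrightarrow> cmod (h t) \<le> M"
  shows "onorm (calc h B) \<le> M"
proof (rule onorm_bound)
  have "cmod (h 0) \<le> M" by (rule M) simp
  then show "0 \<le> M" using norm_ge_zero[of "h 0"] by linarith
qed (rule calc_bound[OF h M])

end

lemma cext_funpow: "(cext B ^^ k) w = ((B ^^ k) (fst w), (B ^^ k) (snd w))"
  by (induct k arbitrary: w) (auto simp: cext_def)

lemma Re_poly_of_real: "Re (poly p (complex_of_real t)) = poly (map_poly Re p) t"
  by (induct p) (auto simp: map_poly_pCons)

lemma Im_poly_of_real: "Im (poly p (complex_of_real t)) = poly (map_poly Im p) t"
  by (induct p) (auto simp: map_poly_pCons)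

lemma poly_op_cpx:
  fixes B :: "'b::real_vector \<Rightarrow> 'b"
  shows "poly_op p (cext B) w = cpx (pB (map_poly Re p) B) (pB (map_poly Im p) B) w"
proof -
  have d1: "degree (map_poly Re p) \<le> degree p" and d2: "degree (map_poly Im p) \<le> degree p"
    by (rule map_poly_degree_leq)+
  have "fst (poly_op p (cext B) w) = pB (map_poly Re p) B (fst w) - pB (map_poly Im p) B (snd w)"
    unfolding poly_op_def pB_upto[OF d1] pB_upto[OF d2]
    by (simp add: fst_sum cmul_def cext_funpow coeff_map_poly sum_subtractf)
  moreover have "snd (poly_op p (cext B) w) = pB (map_poly Re p) B (snd w) + pB (map_poly Im p) B (fst w)"
    unfolding poly_op_def pB_upto[OF d1] pB_upto[OF d2]
    by (simp add: snd_sum cmul_def cext_funpow coeff_map_poly sum.distrib)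
  ultimately show ?thesis by (simp add: cpx_def prod_eq_iff)
qed

lemma (in cb) poly_op_calc:
  "poly_op p (cext B) w = calc (\<lambda>t. poly p (complex_of_real t)) B w"
proof -
  have "(\<lambda>t. Re (poly p (complex_of_real t))) = poly (map_poly Re p)" by (rule ext) (simp add: Re_poly_of_real)
  moreover have "(\<lambda>t. Im (poly p (complex_of_real t))) = poly (map_poly Im p)" by (rule ext) (simp add: Im_poly_of_real)
  ultimately show ?thesis unfolding calc_def poly_op_cpx
    by (simp add: rc_poly[abs_def])
qed

lemma zero_on_dense:
  fixes f :: "'b::real_normed_vector \<Rightarrow> 'c::real_normed_vector"
  assumes "closure V = UNIV" "continuous_on UNIV f" "\<And>v. v \<in> V \<Longrightarrow> f v = 0"
  shows "f x = 0"
proof -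
  have "x \<in> closure V" using assms(1) by simp
  then obtain a where a: "\<And>n. a n \<in> V" "a \<longlonglongrightarrow> x" unfolding closure_sequential by metis
  have "(\<lambda>n. f (a n)) \<longlonglongrightarrow> f x"
    using assms(2) a(2) continuous_on_tendsto_compose[of UNIV f a x] by simp
  moreover have "(\<lambda>n. f (a n)) = (\<lambda>n. 0)" using a(1) assms(3) by simp
  ultimately have "(\<lambda>n. 0) \<longlonglongrightarrow> f x" by simp
  then show ?thesis by (simp add: LIMSEQ_const_iff)
qed

lemma sa_dense_range:
  fixes S :: "'b::{real_inner,complete_space} \<Rightarrow> 'b"
  assumes "sa S" "\<And>w. S w = 0 \<Longrightarrow> w = 0"
  shows "closure (range S) = UNIV"
proof (rule dense_if_orth)
  have "linear S" using assms(1) sa_def bounded_linear.linear by blast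
  then show "subspace (range S)" by (rule linear_subspace_image[OF _ subspace_UNIV])
  fix z assume "\<forall>y\<in>range S. inner z y = 0"
  then have "inner z (S (S z)) = 0" by blast
  then have "inner (S z) (S z) = 0" using assms(1) sa_def by metis
  then show "z = 0" using assms(2) by simp
qed

locale sadj =
  fixes A :: "'a::{real_inner,complete_space} op"
  assumes dsaA: "dsa A"
begin

abbreviation "D \<equiv> fst A"
abbreviation "T \<equiv> snd A"

lemma dsa_parts: "subspace D \<and> closure D = UNIV \<and>
     (\<forall>x\<in>D. \<forall>y\<in>D. T (x + y) = T x + T y) \<and>
     (\<forall>c. \<forall>x\<in>D. T (c *\<^sub>R x) = c *\<^sub>R T x) \<and>
     (\<forall>x\<in>D. \<forall>y\<in>D. inner (T x) y = inner x (T y)) \<and>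
     (\<forall>y z. (\<forall>x\<in>D. inner (T x) y = inner x z) \<longrightarrow> y \<in> D)"
  using dsaA unfolding dsa_def Let_def .

lemma subD: "subspace D" using dsa_parts by (rule conjunct1)
lemma denseD: "closure D = UNIV" using dsa_parts[THEN conjunct2] by (rule conjunct1)
lemma addT: "x \<in> D \<Longrightarrow> y \<in> D \<Longrightarrow> T (x + y) = T x + T y"
  using dsa_parts[THEN conjunct2, THEN conjunct2, THEN conjunct1] by blast
lemma scT: "x \<in> D \<Longrightarrow> T (c *\<^sub>R x) = c *\<^sub>R T x"
  using dsa_parts[THEN conjunct2, THEN conjunct2, THEN conjunct2, THEN conjunct1] by blast
lemma symT: "x \<in> D \<Longrightarrow> y \<in> D \<Longrightarrow> inner (T x) y = inner x (T y)"
  using dsa_parts[THEN conjunct2, THEN conjunct2, THEN conjunct2, THEN conjunct2, THEN conjunct1] by blast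
lemma adjT: "(\<forall>x\<in>D. inner (T x) y = inner x z) \<Longrightarrow> y \<in> D"
  using dsa_parts[THEN conjunct2, THEN conjunct2, THEN conjunct2, THEN conjunct2, THEN conjunct2] by blast

lemma D0: "0 \<in> D" using subD subspace_0 by blast
lemma Dadd: "x \<in> D \<Longrightarrow> y \<in> D \<Longrightarrow> x + y \<in> D" using subD subspace_add by blast
lemma Dsc: "x \<in> D \<Longrightarrow> c *\<^sub>R x \<in> D" using subD subspace_scale by blast
lemma Ddiff: "x \<in> D \<Longrightarrow> y \<in> D \<Longrightarrow> x - y \<in> D" using subD subspace_diff by blast
lemma T0: "T 0 = 0" using scT[of 0 0] D0 by simp
lemma Tdiff: "x \<in> D \<Longrightarrow> y \<in> D \<Longrightarrow> T (x - y) = T x - T y"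
  using addT[of x "(-1) *\<^sub>R y"] scT[of y "-1"] Dsc[of y "-1"] by simp

lemma T_eq:
  assumes "y \<in> D" "\<And>x. x \<in> D \<Longrightarrow> inner (T x) y = inner x z"
  shows "T y = z"
proof -
  have "inner x (T y - z) = 0" if "x \<in> D" for x
    using assms symT[OF that assms(1)] that by (simp add: inner_diff_right)
  then have "T y - z = 0" using dense_zero[OF denseD] by blast
  then show ?thesis by simp
qed

lemma T_closed:
  assumes "\<And>k. x k \<in> D" "x \<longlonglongrightarrow> v" "(\<lambda>k. T (x k)) \<longlonglongrightarrow> u"
  shows "v \<in> D \<and> T v = u"
proof -
  have i: "inner (T y) v = inner y u" if y: "y \<in> D" for y
  proof -
    have "(\<lambda>k. inner (T y) (x k)) \<longlonglongrightarrow> inner (T y) v" by (intro tendsto_intros assms)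
    moreover have "(\<lambda>k. inner y (T (x k))) \<longlonglongrightarrow> inner y u" by (intro tendsto_intros assms)
    moreover have "(\<lambda>k. inner (T y) (x k)) = (\<lambda>k. inner y (T (x k)))" by (rule ext) (rule symT[OF y assms(1)])
    ultimately show ?thesis using LIMSEQ_unique by metis
  qed
  then have vD: "v \<in> D" using adjT by blast
  then show ?thesis using T_eq[OF vD] i by blast
qed

definition G :: "('a \<times> 'a) set" where "G = {(x, T x) | x. x \<in> D}"

lemma G_sub: "subspace G"
  unfolding subspace_def G_def
proof (intro conjI ballI allI)
  show "0 \<in> {(x, T x) |x. x \<in> D}" using D0 T0 by (auto simp: zero_prod_def)
next
  fix a b assume "a \<in> {(x, T x) |x. x \<in> D}" "b \<in> {(x, T x) |x. x \<in> D}"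
  then obtain x y where "a = (x, T x)" "b = (y, T y)" "x \<in> D" "y \<in> D" by blast
  then show "a + b \<in> {(x, T x) |x. x \<in> D}" using addT Dadd by (auto intro!: exI[of _ "x + y"])
next
  fix c :: real and a assume "a \<in> {(x, T x) |x. x \<in> D}"
  then obtain x where "a = (x, T x)" "x \<in> D" by blast
  then show "c *\<^sub>R a \<in> {(x, T x) |x. x \<in> D}" using scT Dsc by (auto intro!: exI[of _ "c *\<^sub>R x"])
qed

lemma G_closed: "closed G"
proof (rule closed_sequential_limits[THEN iffD2], intro allI impI)
  fix s l assume a: "(\<forall>n. s n \<in> G) \<and> s \<longlonglongrightarrow> l"
  then have "\<forall>n. \<exists>x. x \<in> D \<and> s n = (x, T x)" unfolding G_def by blast
  then obtain x where x: "\<And>n. x n \<in> D" "\<And>n. s n = (x n, T (x n))" by metis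
  have "(\<lambda>n. fst (s n)) \<longlonglongrightarrow> fst l" "(\<lambda>n. snd (s n)) \<longlonglongrightarrow> snd l" using a by (auto intro: tendsto_fst tendsto_snd)
  then have "x \<longlonglongrightarrow> fst l" "(\<lambda>n. T (x n)) \<longlonglongrightarrow> snd l" using x(2) by simp_all
  then have "fst l \<in> D \<and> T (fst l) = snd l" using T_closed x(1) by blast
  then show "l \<in> G" unfolding G_def by (intro CollectI exI[of _ "fst l"]) (auto simp: prod_eq_iff)
qed

lemma R_exists: "\<exists>x. x \<in> D \<and> T x \<in> D \<and> x + T (T x) = w"
proof -
  obtain m where m: "m \<in> G" "\<forall>y\<in>G. inner ((w, 0) - m) y = 0"
    using proj_exists[OF G_sub G_closed] by blast
  then obtain x where x: "x \<in> D" "m = (x, T x)" unfolding G_def by blast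
  have i: "inner (T y) (T x) = inner y (w - x)" if y: "y \<in> D" for y
  proof -
    have "(y, T y) \<in> G" using y unfolding G_def by blast
    then have "inner ((w, 0) - (x, T x)) (y, T y) = 0" using m(2) x(2) by blast
    then show ?thesis by (simp add: inner_Pair inner_commute algebra_simps)
  qed
  then have TxD: "T x \<in> D" using adjT by blast
  have "T (T x) = w - x" by (rule T_eq[OF TxD]) (use i in simp)
  then show ?thesis using x TxD by (intro exI[of _ x]) simp
qed

lemma R_unique:
  assumes "x \<in> D" "T x \<in> D" "x + T (T x) = w" "y \<in> D" "T y \<in> D" "y + T (T y) = w"
  shows "x = y"
proof -
  define d where "d = x - y"
  have dD: "d \<in> D" and TdD: "T d \<in> D" using assms Ddiff Tdiff by (auto simp: d_def)
  have "T d = T x - T y" using Tdiff assms d_def by blast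
  then have Tdd: "T (T d) = T (T x) - T (T y)" using Tdiff assms by simp
  have "d + T (T d) = (x + T (T x)) - (y + T (T y))" by (subst Tdd) (simp add: d_def algebra_simps)
  then have eq: "d + T (T d) = 0" using assms by simp
  have "inner (T (T d)) d = inner (T d) (T d)" using symT[OF TdD dD] .
  then have "inner d d + inner (T d) (T d) = inner (d + T (T d)) d"
    by (simp add: inner_add_left)
  then have "inner d d + inner (T d) (T d) = 0" using eq by simp
  moreover have "inner d d \<ge> 0" "inner (T d) (T d) \<ge> 0" by simp_all
  ultimately have "inner d d = 0" by linarith
  then show ?thesis by (simp add: d_def)
qed

definition R :: "'a \<Rightarrow> 'a" where "R = one_plus_sq_inv A"

lemma R_prop: "R w \<in> D" "T (R w) \<in> D" "R w + T (T (R w)) = w"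
proof -
  have "\<exists>!x. x \<in> D \<and> T x \<in> D \<and> x + T (T x) = w" using R_exists R_unique by blast
  then have "R w \<in> D \<and> T (R w) \<in> D \<and> R w + T (T (R w)) = w"
    unfolding R_def one_plus_sq_inv_def by (rule theI')
  then show "R w \<in> D" "T (R w) \<in> D" "R w + T (T (R w)) = w" by auto
qed

lemma R_eq: "x \<in> D \<Longrightarrow> T x \<in> D \<Longrightarrow> x + T (T x) = w \<Longrightarrow> R w = x"
  using R_unique R_prop by blast

definition K :: "'a \<Rightarrow> 'a" where "K w = T (R w)"

lemma TT_R: "T (T (R w)) = w - R w" using R_prop(3)[of w] by (simp add: algebra_simps)

lemma R_add: "R (u + v) = R u + R v"
proof (rule R_eq)
  show "R u + R v \<in> D" using R_prop Dadd by blast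
  have "T (R u + R v) = T (R u) + T (R v)" using addT R_prop by blast
  then show "T (R u + R v) \<in> D" using R_prop Dadd by simp
  have e: "T (T (R u + R v)) = T (T (R u)) + T (T (R v))" using addT R_prop \<open>T (R u + R v) = _\<close> by simp
  have "R u + R v + T (T (R u + R v)) = (R u + T (T (R u))) + (R v + T (T (R v)))"
    by (simp only: e) (simp add: algebra_simps)
  then show "R u + R v + T (T (R u + R v)) = u + v" using R_prop(3)[of u] R_prop(3)[of v] by simp
qed

lemma R_sc: "R (c *\<^sub>R u) = c *\<^sub>R R u"
proof (rule R_eq)
  show "c *\<^sub>R R u \<in> D" using R_prop Dsc by blast
  have "T (c *\<^sub>R R u) = c *\<^sub>R T (R u)" using scT R_prop by blast
  then show "T (c *\<^sub>R R u) \<in> D" using R_prop Dsc by simp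
  have "T (T (c *\<^sub>R R u)) = c *\<^sub>R T (T (R u))" using scT R_prop \<open>T (c *\<^sub>R R u) = _\<close> by simp
  then show "c *\<^sub>R R u + T (T (c *\<^sub>R R u)) = c *\<^sub>R u" using R_prop(3)[of u] by (simp add: scaleR_add_right[symmetric])
qed

lemma R_inner: "inner (R u) v = inner (R u) (R v) + inner (K u) (K v)"
proof -
  have "inner (R u) v = inner (R u) (R v + T (T (R v)))" using R_prop(3)[of v] by simp
  also have "\<dots> = inner (R u) (R v) + inner (R u) (T (T (R v)))" by (simp add: inner_add_right)
  also have "inner (R u) (T (T (R v))) = inner (T (R u)) (T (R v))" using symT R_prop by metis
  finally show ?thesis by (simp add: K_def)
qed

lemma R_sym: "inner (R u) v = inner u (R v)"
  using R_inner[of u v] R_inner[of v u] by (simp add: inner_commute)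

lemma R_normsq: "norm (R u)^2 + norm (K u)^2 = inner (R u) u"
  using R_inner[of u u] by (simp add: power2_norm_eq_inner)

lemma R_bound: "norm (R u) \<le> norm u"
proof -
  have "norm (R u)^2 \<le> inner (R u) u" using R_normsq[of u] zero_le_power2[of "norm (K u)"] by linarith
  also have "\<dots> \<le> norm (R u) * norm u" by (rule norm_cauchy_schwarz)
  finally have "norm (R u) * norm (R u) \<le> norm (R u) * norm u" by (simp add: power2_eq_square)
  then show ?thesis by (cases "norm (R u) = 0") (auto simp: mult_le_cancel_left_pos)
qed

lemma K_bound: "norm (K u) \<le> norm u"
proof -
  have "norm (K u)^2 \<le> inner (R u) u" using R_normsq[of u] zero_le_power2[of "norm (R u)"] by linarith
  also have "\<dots> \<le> norm (R u) * norm u" by (rule norm_cauchy_schwarz)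
  also have "\<dots> \<le> norm u * norm u" using R_bound[of u] by (simp add: mult_right_mono)
  finally have "norm (K u)^2 \<le> norm u ^2" by (simp add: power2_eq_square)
  then show ?thesis by (simp add: power2_le_iff_abs_le)
qed

lemma R_bl: "bounded_linear R"
  by (rule bounded_linear_intro[of _ 1]) (auto simp: R_add R_sc R_bound)

lemma R_sa: "sa R" unfolding sa_def using R_bl R_sym by blast

lemma R_posop: "posop R"
proof -
  have "0 \<le> inner (R u) u" for u
  proof -
    have "0 \<le> norm (R u)^2 + norm (K u)^2" by simp
    then show ?thesis using R_normsq[of u] by simp
  qed
  then show ?thesis unfolding posop_def using R_sa by blast
qed

lemma R_inj: "R w = 0 \<Longrightarrow> w = 0"
  using R_prop(3)[of w] T0 by simp

lemma K_add: "K (u + v) = K u + K v" unfolding K_def using R_add addT R_prop by simp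
lemma K_sc: "K (c *\<^sub>R u) = c *\<^sub>R K u" unfolding K_def using R_sc scT R_prop by simp

lemma K_bl: "bounded_linear K"
  by (rule bounded_linear_intro[of _ 1]) (auto simp: K_add K_sc K_bound)

lemma RK_comm: "R (K w) = K (R w)"
proof -
  define y where "y = R (R w)"
  have yD: "y \<in> D" "T y \<in> D" using R_prop y_def by auto
  have RwD: "R w \<in> D" "T (R w) \<in> D" using R_prop by auto
  have TTy: "T (T y) = R w - y" using TT_R[of "R w"] y_def by simp
  have TTyD: "T (T y) \<in> D" using TTy Ddiff RwD yD by simp
  have "T (T (T y)) = T (R w) - T y" using TTy Tdiff RwD yD by simp
  then have "T y + T (T (T y)) = T (R w)" by simp
  then have "R (T (R w)) = T y" using R_eq[of "T y" "T (R w)"] yD TTyD by simp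
  then show ?thesis by (simp add: K_def y_def)
qed

lemma K_sym: "inner (K u) v = inner u (K v)"
proof -
  have "inner (K u) v = inner (T (R u)) (R v + T (T (R v)))" using R_prop(3)[of v] by (simp add: K_def)
  also have "\<dots> = inner (T (R u)) (R v) + inner (T (R u)) (T (T (R v)))" by (simp add: inner_add_right)
  also have "inner (T (R u)) (R v) = inner (R u) (T (R v))" using symT R_prop by metis
  also have "inner (T (R u)) (T (T (R v))) = inner (T (T (R u))) (T (R v))" using symT R_prop by metis
  also have "inner (R u) (T (R v)) + inner (T (T (R u))) (T (R v)) = inner (R u + T (T (R u))) (T (R v))"
    by (simp add: inner_add_left)
  also have "\<dots> = inner u (K v)" using R_prop(3)[of u] by (simp add: K_def)
  finally show ?thesis .
qed

lemma K_sa: "sa K" unfolding sa_def using K_bl K_sym by blast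

lemma KK: "K (K w) = R w - R (R w)"
proof -
  have "K (K w) = T (R (T (R w)))" by (simp add: K_def)
  also have "R (T (R w)) = T (R (R w))" using RK_comm by (simp add: K_def)
  finally show ?thesis using TT_R[of "R w"] by simp
qed

end

context sadj begin

definition X :: "'a \<Rightarrow> 'a" where "X w = 2 *\<^sub>R R w - w"

lemma X_bl: "bounded_linear X"
proof -
  have "bounded_linear (\<lambda>w. 2 *\<^sub>R R w - w)"
    by (intro bounded_linear_sub bounded_linear_compose[OF bounded_linear_scaleR_right R_bl] bounded_linear_ident)
  then show ?thesis unfolding X_def[abs_def] .
qed

lemma X_cb: "cb X"
proof
  show "sa X" unfolding sa_def
    using X_bl R_sym by (simp add: X_def inner_diff_left inner_diff_right inner_commute)
  fix x
  have a: "norm (R x)^2 \<le> inner (R x) x" using R_normsq[of x] zero_le_power2[of "norm (K x)"] by linarith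
  have "norm (X x)^2 = 4 * norm (R x)^2 - 4 * inner (R x) x + norm x ^2"
    unfolding X_def power2_norm_eq_inner by (simp add: inner_diff inner_commute algebra_simps)
  also have "\<dots> \<le> norm x ^2" using a by simp
  finally show "norm (X x) \<le> norm x" by (simp add: power2_le_iff_abs_le)
qed

interpretation Xc: cb X by (rule X_cb)

definition sqg :: "real \<Rightarrow> real" where "sqg t = sqrt ((1 + t) / 2)"

lemma sqg_cont: "continuous_on {-1..1} sqg" unfolding sqg_def by (intro continuous_intros) auto

definition S0 :: "'a \<Rightarrow> 'a" where "S0 = rcalc sqg X"

lemma S0_pos: "posop S0"
  unfolding S0_def by (rule Xc.rc_pos[OF sqg_cont]) (simp add: sqg_def)

lemma S0_sq: "S0 (S0 w) = R w"
proof -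
  have "S0 (S0 w) = rcalc (\<lambda>t. sqg t * sqg t) X w" unfolding S0_def by (rule Xc.rc_mult[symmetric, OF sqg_cont sqg_cont])
  also have "\<dots> = rcalc (poly [:1/2, 1/2:]) X w"
  proof (rule Xc.rc_congr)
    show "continuous_on {-1..1} (poly [:1/2, 1/2::real:])"
      using continuous_on_poly[OF continuous_on_id[of "{-1..1::real}"], of "[:1/2, 1/2::real:]"] by simp
  qed (simp add: sqg_def)
  also have "\<dots> = pB [:1/2, 1/2:] X w" by (rule Xc.rc_poly)
  also have "\<dots> = R w"
    using R_sc[of 0 0] by (simp add: pB_pCons[OF Xc.linB] X_def R_sc R_add)
  finally show ?thesis .
qed

lemma S0_commute:
  assumes "bounded_linear C" "\<And>x. R (C x) = C (R x)"
  shows "S0 (C x) = C (S0 x)"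
  unfolding S0_def
proof (rule Xc.rc_commute[OF sqg_cont assms(1)])
  fix x show "X (C x) = C (X x)"
    using assms linear_diff[OF bounded_linear.linear[OF assms(1)]] linear_scale[OF bounded_linear.linear[OF assms(1)]]
    by (simp add: X_def)
qed

lemma sqrt_unique:
  assumes U: "posop U" and UU: "\<And>w. U (U w) = R w"
  shows "U = S0"
proof -
  have saU: "sa U" and blU: "bounded_linear U" using U unfolding posop_def sa_def by auto
  have saV: "sa S0" and blV: "bounded_linear S0" using S0_pos unfolding posop_def sa_def by auto
  have UR: "R (U x) = U (R x)" for x using UU[of "U x"] UU[of x] by simp
  have comm: "S0 (U x) = U (S0 x)" for x by (rule S0_commute[OF blU UR])
  define Dd where "Dd x = U x - S0 x" for x
  have zero: "U (Dd x) + S0 (Dd x) = 0" for x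
  proof -
    have "U (Dd x) = U (U x) - U (S0 x)" unfolding Dd_def by (rule linear_diff[OF bounded_linear.linear[OF blU]])
    moreover have "S0 (Dd x) = S0 (U x) - S0 (S0 x)" unfolding Dd_def by (rule linear_diff[OF bounded_linear.linear[OF blV]])
    ultimately show ?thesis using UU S0_sq comm by simp
  qed
  have Dz: "U (Dd x) = 0 \<and> S0 (Dd x) = 0" for x
  proof -
    have "inner (U (Dd x) + S0 (Dd x)) (Dd x) = 0" using zero[of x] by simp
    then have "inner (U (Dd x)) (Dd x) + inner (S0 (Dd x)) (Dd x) = 0" by (simp add: inner_add_left)
    moreover have "inner (U (Dd x)) (Dd x) \<ge> 0" "inner (S0 (Dd x)) (Dd x) \<ge> 0"
      using U S0_pos unfolding posop_def by auto
    ultimately have "inner (U (Dd x)) (Dd x) = 0" "inner (S0 (Dd x)) (Dd x) = 0" by linarith+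
    then show ?thesis using posop_zero U S0_pos by blast
  qed
  have "Dd x = 0" for x
  proof -
    have e: "inner (Dd x) y = inner x (U y) - inner x (S0 y)" for y
      using saU saV unfolding sa_def by (simp add: Dd_def inner_diff_left)
    have "inner (Dd x) (Dd x) = 0" using e[of "Dd x"] Dz[of x] by simp
    then show ?thesis by simp
  qed
  then show ?thesis by (auto simp: Dd_def)
qed

definition S :: "'a \<Rightarrow> 'a" where "S = inv_sqrt_one_plus_sq A"

lemma S_eq: "S = S0"
  unfolding S_def inv_sqrt_one_plus_sq_def
proof (rule the_equality)
  have "S0 \<circ> S0 = one_plus_sq_inv A" using S0_sq by (auto simp: R_def)
  then show "bounded_linear S0 \<and> (\<forall>x y. inner (S0 x) y = inner x (S0 y)) \<and> (\<forall>x. 0 \<le> inner (S0 x) x) \<and> S0 \<circ> S0 = one_plus_sq_inv A"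
    using S0_pos unfolding posop_def sa_def by auto
next
  fix U assume "bounded_linear U \<and> (\<forall>x y. inner (U x) y = inner x (U y)) \<and> (\<forall>x. 0 \<le> inner (U x) x) \<and> U \<circ> U = one_plus_sq_inv A"
  then have "posop U" "\<And>w. U (U w) = R w" unfolding posop_def sa_def R_def by (auto simp: fun_eq_iff)
  then show "U = S0" by (rule sqrt_unique)
qed

lemma S_pos: "posop S" using S0_pos S_eq by simp
lemma S_sq: "S (S w) = R w" using S0_sq S_eq by simp
lemma S_bl: "bounded_linear S" using S_pos unfolding posop_def sa_def by auto
lemma S_sa: "sa S" using S_pos unfolding posop_def by auto
lemma S_commute: "bounded_linear C \<Longrightarrow> (\<And>x. R (C x) = C (R x)) \<Longrightarrow> S (C x) = C (S x)"
  using S0_commute S_eq by simp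
lemma S_inj: "S w = 0 \<Longrightarrow> w = 0"
proof -
  assume "S w = 0"
  then have "S (S w) = 0" using linear_0[OF bounded_linear.linear[OF S_bl]] by simp
  then have "R w = 0" using S_sq[of w] by simp
  then show "w = 0" by (rule R_inj)
qed
lemma S_dense: "closure (range S) = UNIV" by (rule sa_dense_range[OF S_sa S_inj])
lemma R_dense: "closure (range R) = UNIV" by (rule sa_dense_range[OF R_sa R_inj])

lemma SK_comm: "S (K x) = K (S x)" by (rule S_commute[OF K_bl]) (simp add: RK_comm)

lemma K_S_bound: "norm (K u) \<le> norm (S u)"
proof -
  have "norm (K u)^2 = inner (K (K u)) u" using K_sym by (simp add: power2_norm_eq_inner)
  also have "\<dots> = inner (R u) u - inner (R (R u)) u" by (simp add: KK inner_diff_left)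
  also have "inner (R (R u)) u = inner (R u) (R u)" using R_sym by simp
  also have "inner (R u) u = norm (S u)^2"
  proof -
    have "inner (S (S u)) u = inner (S u) (S u)" using S_sa sa_def by blast
    then show ?thesis by (simp add: S_sq power2_norm_eq_inner)
  qed
  finally have "norm (K u)^2 \<le> norm (S u)^2" by simp
  then show ?thesis by (simp add: power2_le_iff_abs_le)
qed

lemma SD: "S v \<in> D \<and> norm (T (S v)) \<le> norm v"
proof -
  have "v \<in> closure (range S)" using S_dense by simp
  then obtain a where a: "\<And>n. a n \<in> range S" "a \<longlonglongrightarrow> v" unfolding closure_sequential by metis
  then have "\<forall>n. \<exists>x. a n = S x" by (auto simp: image_iff)
  then obtain w where w: "\<And>n. a n = S (w n)" using choice[of "\<lambda>n x. a n = S x"] by blast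
  have "a = (\<lambda>n. S (w n))" by (rule ext) (rule w)
  then have Sw: "(\<lambda>n. S (w n)) \<longlonglongrightarrow> v" using a(2) by simp
  have RS: "(\<lambda>n. R (w n)) \<longlonglongrightarrow> S v"
    using bounded_linear.tendsto[OF S_bl Sw] S_sq by simp
  have "Cauchy (\<lambda>n. K (w n))"
  proof (rule metric_CauchyI)
    fix e :: real assume e: "e > 0"
    have "Cauchy (\<lambda>n. S (w n))" using Sw LIMSEQ_imp_Cauchy by blast
    then obtain N where N: "\<And>m n. m \<ge> N \<Longrightarrow> n \<ge> N \<Longrightarrow> dist (S (w m)) (S (w n)) < e"
      using e metric_CauchyD by blast
    show "\<exists>N. \<forall>m\<ge>N. \<forall>n\<ge>N. dist (K (w m)) (K (w n)) < e"
    proof (intro exI[of _ N] allI impI)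
      fix m n assume "m \<ge> N" "n \<ge> N"
      have "dist (K (w m)) (K (w n)) = norm (K (w m - w n))"
        by (simp add: dist_norm linear_diff[OF bounded_linear.linear[OF K_bl]])
      also have "\<dots> \<le> norm (S (w m - w n))" by (rule K_S_bound)
      also have "\<dots> = dist (S (w m)) (S (w n))"
        by (simp add: dist_norm linear_diff[OF bounded_linear.linear[OF S_bl]])
      finally show "dist (K (w m)) (K (w n)) < e" using N[OF \<open>m \<ge> N\<close> \<open>n \<ge> N\<close>] by linarith
    qed
  qed
  then obtain u where u: "(\<lambda>n. K (w n)) \<longlonglongrightarrow> u" using Cauchy_convergent_iff convergent_def by blast
  have "(\<lambda>n. T (R (w n))) \<longlonglongrightarrow> u" using u by (simp add: K_def)
  then have c: "S v \<in> D \<and> T (S v) = u" using T_closed[of "\<lambda>n. R (w n)"] R_prop RS by blast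
  have l1: "(\<lambda>n. norm (K (w n))) \<longlonglongrightarrow> norm u" by (intro tendsto_intros u)
  have l2: "(\<lambda>n. norm (S (w n))) \<longlonglongrightarrow> norm v" by (intro tendsto_intros Sw)
  have "norm u \<le> norm v" by (rule tendsto_le[OF sequentially_bot l2 l1]) (simp add: K_S_bound)
  then show ?thesis using c by simp
qed

definition Psi :: "'a \<Rightarrow> 'a" where "Psi v = T (S v)"

lemma Psi_riesz: "riesz A = Psi"
  by (rule ext) (simp add: riesz_def Psi_def S_def)

lemma Psi_add: "Psi (u + v) = Psi u + Psi v"
  unfolding Psi_def using addT SD linear_add[OF bounded_linear.linear[OF S_bl]] by simp
lemma Psi_sc: "Psi (c *\<^sub>R u) = c *\<^sub>R Psi u"
  unfolding Psi_def using scT SD linear_scale[OF bounded_linear.linear[OF S_bl]] by simp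
lemma Psi_bound: "norm (Psi v) \<le> norm v" unfolding Psi_def using SD by simp
lemma Psi_bl: "bounded_linear Psi"
  by (rule bounded_linear_intro[of _ 1]) (auto simp: Psi_add Psi_sc Psi_bound)

lemma Psi_S: "Psi (S w) = K w" by (simp add: Psi_def S_sq K_def)

lemma cont_bl: "bounded_linear f \<Longrightarrow> continuous_on UNIV f"
  by (simp add: linear_continuous_on)

lemma S_Psi: "S (Psi v) = K v"
proof -
  have "S (Psi v) - K v = 0"
  proof (rule zero_on_dense[OF S_dense, of "\<lambda>v. S (Psi v) - K v"])
    show "continuous_on UNIV (\<lambda>v. S (Psi v) - K v)"
      by (intro continuous_on_diff continuous_on_compose2[OF cont_bl[OF S_bl] cont_bl[OF Psi_bl]] cont_bl[OF K_bl]) auto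
    fix v assume "v \<in> range S"
    then obtain w where "v = S w" by blast
    then show "S (Psi v) - K v = 0" by (simp add: Psi_S SK_comm)
  qed
  then show ?thesis by simp
qed

lemma Psi_sym: "inner (Psi x) y = inner x (Psi y)"
proof -
  have "inner (Psi x) y - inner x (Psi y) = 0"
  proof (rule zero_on_dense[OF S_dense, of "\<lambda>y. inner (Psi x) y - inner x (Psi y)"])
    show "continuous_on UNIV (\<lambda>y. inner (Psi x) y - inner x (Psi y))"
      by (intro continuous_intros continuous_on_compose2[OF cont_bl[OF Psi_bl]]) auto
    fix v assume "v \<in> range S"
    then obtain w where v: "v = S w" by blast
    have "inner (Psi x) (S w) = inner (S (Psi x)) w" using S_sa unfolding sa_def by simp
    also have "\<dots> = inner x (K w)" by (simp add: S_Psi K_sym)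
    finally show "inner (Psi x) v - inner x (Psi v) = 0" by (simp add: v Psi_S)
  qed
  then show ?thesis by simp
qed

lemma Psi_sa: "sa Psi" unfolding sa_def using Psi_bl Psi_sym by blast

lemma Psi_cb: "cb Psi" by unfold_locales (auto simp: Psi_sa Psi_bound)

lemma Psi_sq: "Psi (Psi v) = v - R v"
proof -
  have "Psi (Psi v) - (v - R v) = 0"
  proof (rule zero_on_dense[OF R_dense, of "\<lambda>v. Psi (Psi v) - (v - R v)"])
    show "continuous_on UNIV (\<lambda>v. Psi (Psi v) - (v - R v))"
      by (intro continuous_on_diff continuous_on_compose2[OF cont_bl[OF Psi_bl] cont_bl[OF Psi_bl]] cont_bl[OF R_bl] continuous_on_id) auto
    fix v assume "v \<in> range R"
    then obtain w where v: "v = R w" by blast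
    have "Psi (Psi (R w)) = Psi (Psi (S (S w)))" by (simp add: S_sq)
    also have "\<dots> = Psi (S (K w))" by (simp add: Psi_S SK_comm)
    also have "\<dots> = K (K w)" by (simp add: Psi_S)
    finally show "Psi (Psi v) - (v - R v) = 0" by (simp add: v KK)
  qed
  then show ?thesis by simp
qed

end

lemma lim_psinv_top: "filterlim (\<lambda>t::real. t / sqrt (1 - t^2)) at_top (at_left 1)"
  by real_asymp
lemma lim_psinv_bot: "filterlim (\<lambda>t::real. t / sqrt (1 - t^2)) at_bot (at_right (-1))"
  by real_asymp
lemma lim_psi_top: "((\<lambda>l::real. l / sqrt (1 + l^2)) \<longlongrightarrow> 1) at_top"
  by real_asymp
lemma lim_psi_bot: "((\<lambda>l::real. l / sqrt (1 + l^2)) \<longlongrightarrow> -1) at_bot"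
  by real_asymp

definition psinv :: "real \<Rightarrow> real" where "psinv t = t / sqrt (1 - t^2)"

lemma psi_bounds: "-1 < psi l \<and> psi l < 1"
proof -
  have p: "sqrt (1 + l^2) > 0" by (simp add: add_pos_nonneg)
  have "sqrt (l^2) < sqrt (1 + l^2)" by (rule real_sqrt_less_mono) simp
  then have s: "\<bar>l\<bar> < sqrt (1 + l^2)" by simp
  have "\<bar>psi l\<bar> = \<bar>l\<bar> / sqrt (1 + l^2)" using p by (simp add: psi_def abs_divide)
  also have "\<dots> < 1" using s p by (simp add: divide_less_eq)
  finally show ?thesis by (simp add: abs_less_iff)
qed

lemma psinv_psi: "psinv (psi l) = l"
proof -
  have p: "sqrt (1 + l^2) > 0" by (simp add: add_pos_nonneg)
  have p2: "(sqrt (1 + l^2))^2 = 1 + l^2" by (simp add: add_nonneg_nonneg)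
  have "1 - (psi l)^2 = 1 / (1 + l^2)"
  proof -
    have "(psi l)^2 = l^2 / (1 + l^2)" by (simp add: psi_def power_divide p2)
    moreover have "1 + l^2 > 0" by (simp add: add_pos_nonneg)
    ultimately show ?thesis by (simp add: field_simps)
  qed
  then have "sqrt (1 - (psi l)^2) = 1 / sqrt (1 + l^2)" by (simp add: real_sqrt_divide)
  then show ?thesis using p by (simp add: psinv_def psi_def)
qed

lemma psi_psinv: "-1 < t \<Longrightarrow> t < 1 \<Longrightarrow> psi (psinv t) = t"
proof -
  assume t: "-1 < t" "t < 1"
  have "t^2 < 1" using abs_square_less_1[of t] t by (simp add: abs_less_iff)
  then have q: "1 - t^2 > 0" by simp
  have q2: "(sqrt (1 - t^2))^2 = 1 - t^2" using q by simp
  have "1 + (psinv t)^2 = 1 / (1 - t^2)"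
  proof -
    have "(psinv t)^2 = t^2 / (1 - t^2)" by (simp add: psinv_def power_divide q2)
    then show ?thesis using q by (simp add: field_simps)
  qed
  then have "sqrt (1 + (psinv t)^2) = 1 / sqrt (1 - t^2)" by (simp add: real_sqrt_divide)
  moreover have "sqrt (1 - t^2) > 0" using q by simp
  ultimately show ?thesis by (simp add: psinv_def psi_def)
qed

definition ext :: "(real \<Rightarrow> complex) \<Rightarrow> real \<Rightarrow> complex" where
  "ext f t = (if 1 \<le> t then Lim at_top f else if t \<le> -1 then Lim at_bot f else f (psinv t))"

lemma ext_psi: "ext f (psi l) = f l"
  using psi_bounds[of l] by (simp add: ext_def psinv_psi)

lemma ext_top: "(f \<longlongrightarrow> L) at_top \<Longrightarrow> ext f 1 = L"
  by (simp add: ext_def tendsto_Lim)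
lemma ext_bot: "(f \<longlongrightarrow> L) at_bot \<Longrightarrow> ext f (-1) = L"
  by (simp add: ext_def tendsto_Lim)

lemma sq_ne0: "t \<in> {-1<..<1} \<Longrightarrow> sqrt (1 - t^2) \<noteq> (0::real)"
proof -
  assume "t \<in> {-1<..<1}"
  then have "t^2 < 1" using abs_square_less_1[of t] by (simp add: abs_less_iff)
  then show ?thesis by simp
qed

lemma psinv_cont: "continuous_on {-1<..<1} psinv"
  unfolding psinv_def by (intro continuous_intros) (use sq_ne0 in auto)

lemma ext_cont:
  assumes f: "f \<in> algA"
  shows "continuous_on {-1..1} (ext f)"
proof -
  have cf: "continuous_on UNIV f" using f by (simp add: algA_def)
  obtain Lt where Lt: "(f \<longlongrightarrow> Lt) at_top" using f by (auto simp: algA_def)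
  obtain Lb where Lb: "(f \<longlongrightarrow> Lb) at_bot" using f by (auto simp: algA_def)
  have inner: "continuous_on {-1<..<1} (ext f)"
  proof -
    have "continuous_on {-1<..<1} (\<lambda>t. f (psinv t))"
      by (rule continuous_on_compose2[OF cf psinv_cont]) auto
    moreover have "\<And>t. t \<in> {-1<..<1} \<Longrightarrow> ext f t = f (psinv t)" by (auto simp: ext_def)
    ultimately show ?thesis using continuous_on_cong by (metis (no_types, lifting))
  qed
  show ?thesis
    unfolding continuous_on_def
  proof
    fix t :: real assume t: "t \<in> {-1..1}"
    consider "t = 1" | "t = -1" | "-1 < t \<and> t < 1" using t by force
    then show "(ext f \<longlongrightarrow> ext f t) (at t within {-1..1})"
    proof cases
      case 1
      have "at t within {-1..1} = at_left 1" using 1 at_within_Icc_at_left[of "-1" "1::real"] by simp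
      moreover have "(ext f \<longlongrightarrow> Lt) (at_left 1)"
      proof -
        have "((\<lambda>t. f (psinv t)) \<longlongrightarrow> Lt) (at_left 1)"
          using filterlim_compose[OF Lt lim_psinv_top] unfolding psinv_def by simp
        moreover have "\<forall>\<^sub>F s in at_left 1. f (psinv s) = ext f s"
        proof -
          have "\<forall>\<^sub>F s in at_left (1::real). s \<in> {-1<..<1}"
            by (rule eventually_at_left_real) simp
          then show ?thesis by eventually_elim (simp add: ext_def)
        qed
        ultimately show ?thesis by (rule Lim_transform_eventually)
      qed
      ultimately show ?thesis using 1 ext_top[OF Lt] by simp
    next
      case 2
      have "at t within {-1..1} = at_right (-1)" using 2 at_within_Icc_at_right[of "-1" "1::real"] by simp
      moreover have "(ext f \<longlongrightarrow> Lb) (at_right (-1))"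
      proof -
        have "((\<lambda>t. f (psinv t)) \<longlongrightarrow> Lb) (at_right (-1))"
          using filterlim_compose[OF Lb lim_psinv_bot] unfolding psinv_def by simp
        moreover have "\<forall>\<^sub>F s in at_right (-1::real). f (psinv s) = ext f s"
        proof -
          have "\<forall>\<^sub>F s in at_right (-1::real). s \<in> {-1<..<1}"
            by (rule eventually_at_right_real) simp
          then show ?thesis by eventually_elim (simp add: ext_def)
        qed
        ultimately show ?thesis by (rule Lim_transform_eventually)
      qed
      ultimately show ?thesis using 2 ext_bot[OF Lb] by simp
    next
      case 3
      then have "t \<in> {-1<..<1}" by simp
      then have "(ext f \<longlongrightarrow> ext f t) (at t within {-1<..<1})"
        using inner continuous_on_def by blast
      moreover have "at t within {-1<..<1} = at t" using 3 by (intro at_within_open) auto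
      ultimately have "(ext f \<longlongrightarrow> ext f t) (at t)" by simp
      then show ?thesis by (rule tendsto_within_subset) simp
    qed
  qed
qed

definition sqf :: "real \<Rightarrow> real" where "sqf t = sqrt (1 - t^2)"
lemma sqf_cont: "continuous_on S sqf" unfolding sqf_def by (intro continuous_intros)

definition rp :: "real \<Rightarrow> complex" where
  "rp t = complex_of_real (t * sqf t) - \<i> * complex_of_real (1 - t^2)"
definition rm :: "real \<Rightarrow> complex" where
  "rm t = - complex_of_real (t * sqf t) - \<i> * complex_of_real (1 - t^2)"

lemma sqf_nonneg: "t \<in> {-1..1} \<Longrightarrow> 0 \<le> sqf t"
proof -
  assume "t \<in> {-1..1}"
  then have "t^2 \<le> 1" using abs_square_le_1[of t] by (simp add: abs_le_iff)
  then show ?thesis by (simp add: sqf_def)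
qed

lemma rp_cont: "continuous_on S rp" unfolding rp_def by (intro continuous_intros sqf_cont)
lemma rm_cont: "continuous_on S rm" unfolding rm_def by (intro continuous_intros sqf_cont)

lemma (in cb) calc_congr:
  assumes h: "continuous_on {-1..1} h" and eq: "\<And>t. t \<in> {-1..1} \<Longrightarrow> g t = h t"
  shows "calc g B w = calc h B w"
proof -
  have c1: "continuous_on {-1..1} (\<lambda>t. Re (h t))" and c2: "continuous_on {-1..1} (\<lambda>t. Im (h t))"
    by (intro continuous_intros h)+
  have "rcalc (\<lambda>t. Re (g t)) B = rcalc (\<lambda>t. Re (h t)) B"
    by (rule ext, rule rc_congr[OF c1]) (simp add: eq)
  moreover have "rcalc (\<lambda>t. Im (g t)) B = rcalc (\<lambda>t. Im (h t)) B"
    by (rule ext, rule rc_congr[OF c2]) (simp add: eq)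
  ultimately show ?thesis by (simp add: calc_def)
qed

context sadj begin

interpretation Pc: cb Psi by (rule Psi_cb)

lemma S_calc: "S = rcalc sqf Psi"
proof -
  have "rcalc sqf Psi = S0"
  proof (rule sqrt_unique)
    show "posop (rcalc sqf Psi)" by (rule Pc.rc_pos[OF sqf_cont]) (rule sqf_nonneg)
    fix w
    have "rcalc sqf Psi (rcalc sqf Psi w) = rcalc (\<lambda>t. sqf t * sqf t) Psi w"
      by (rule Pc.rc_mult[symmetric, OF sqf_cont sqf_cont])
    also have "\<dots> = rcalc (poly [:1, 0, -1:]) Psi w"
    proof (rule Pc.rc_congr)
      show "continuous_on {-1..1} (poly [:1, 0, -1::real:])"
        using continuous_on_poly[OF continuous_on_id[of "{-1..1::real}"], of "[:1, 0, -1::real:]"] by simp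
      fix t :: real assume "t \<in> {-1..1}"
      then have "t^2 \<le> 1" using abs_square_le_1[of t] by (simp add: abs_le_iff)
      then show "sqf t * sqf t = poly [:1, 0, -1:] t" by (simp add: sqf_def power2_eq_square)
    qed
    also have "\<dots> = pB [:1, 0, -1:] Psi w" by (rule Pc.rc_poly)
    also have "\<dots> = w - Psi (Psi w)"
      by (simp add: pB_pCons[OF Pc.linB] linear_neg[OF Pc.linB] linear_0[OF Pc.linB])
    also have "\<dots> = R w" by (simp add: Psi_sq)
    finally show "rcalc sqf Psi (rcalc sqf Psi w) = R w" .
  qed
  then show ?thesis using S_eq by simp
qed

lemma K_calc: "K w = rcalc (\<lambda>t. sqf t * t) Psi w"
proof -
  have "rcalc (\<lambda>t. sqf t * t) Psi w = rcalc sqf Psi (rcalc (\<lambda>t. t) Psi w)"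
    by (rule Pc.rc_mult[OF sqf_cont continuous_on_id])
  also have "\<dots> = S (Psi w)" by (simp add: Pc.rc_id S_calc)
  finally show ?thesis by (simp add: S_Psi)
qed

lemma R_calc: "R w = rcalc (\<lambda>t. 1 - t^2) Psi w"
proof -
  have "rcalc (\<lambda>t. 1 - t^2) Psi w = rcalc (poly [:1, 0, -1:]) Psi w"
    by (rule arg_cong[where f="\<lambda>h. rcalc h Psi w"]) (simp add: fun_eq_iff power2_eq_square)
  also have "\<dots> = pB [:1, 0, -1:] Psi w" by (rule Pc.rc_poly)
  also have "\<dots> = w - Psi (Psi w)"
    by (simp add: pB_pCons[OF Pc.linB] linear_neg[OF Pc.linB] linear_0[OF Pc.linB])
  finally show ?thesis by (simp add: Psi_sq)
qed

lemma cmul_i: "cmul \<i> x = (- snd x, fst x)" by (simp add: cmul_def)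

lemma shifted_unique:
  assumes s: "s = 1 \<or> s = -1"
    and x: "x \<in> D \<times> D" "cmul \<i> x + s *\<^sub>R cext T x = w"
    and y: "y \<in> D \<times> D" "cmul \<i> y + s *\<^sub>R cext T y = w"
  shows "x = y"
proof -
  obtain x1 x2 where xe: "x = (x1, x2)" by (cases x)
  obtain y1 y2 where ye: "y = (y1, y2)" by (cases y)
  have D: "x1 \<in> D" "x2 \<in> D" "y1 \<in> D" "y2 \<in> D" using x(1) y(1) xe ye by auto
  define d1 where "d1 = x1 - y1"
  define d2 where "d2 = x2 - y2"
  have dD: "d1 \<in> D" "d2 \<in> D" using D Ddiff by (auto simp: d1_def d2_def)
  have Td: "T d1 = T x1 - T y1" "T d2 = T x2 - T y2" using Tdiff D by (auto simp: d1_def d2_def)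
  have e1: "- x2 + s *\<^sub>R T x1 = - y2 + s *\<^sub>R T y1" "x1 + s *\<^sub>R T x2 = y1 + s *\<^sub>R T y2"
    using x(2) y(2) xe ye by (auto simp: cmul_i cext_def prod_eq_iff)
  have sq: "s * s = 1" using s by auto
  have h1: "s *\<^sub>R T d1 = d2"
  proof -
    have "s *\<^sub>R T d1 - d2 = (- x2 + s *\<^sub>R T x1) - (- y2 + s *\<^sub>R T y1)"
      unfolding Td d2_def by (simp add: algebra_simps)
    then have "s *\<^sub>R T d1 - d2 = 0" using e1(1) by simp
    then show ?thesis by simp
  qed
  have h2: "d1 = (- s) *\<^sub>R T d2"
  proof -
    have "d1 + s *\<^sub>R T d2 = (x1 + s *\<^sub>R T x2) - (y1 + s *\<^sub>R T y2)"
      unfolding Td d1_def by (simp add: algebra_simps)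
    then have "d1 + s *\<^sub>R T d2 = 0" using e1(2) by simp
    then show ?thesis by (simp add: eq_neg_iff_add_eq_0 scaleR_minus_left)
  qed
  have "inner (T d1) d2 = inner d1 (T d2)" by (rule symT[OF dD])
  moreover have "inner (T d1) d2 = s * inner d2 d2"
  proof -
    have "s *\<^sub>R d2 = (s * s) *\<^sub>R T d1" by (simp only: h1[symmetric] scaleR_scaleR)
    then have "T d1 = s *\<^sub>R d2" using sq by simp
    then show ?thesis by simp
  qed
  moreover have "inner d1 (T d2) = - s * inner d1 d1"
  proof -
    have "(- s) *\<^sub>R d1 = ((- s) * (- s)) *\<^sub>R T d2" by (simp only: h2 scaleR_scaleR)
    then have "T d2 = (- s) *\<^sub>R d1" using sq by simp
    then show ?thesis by simp
  qed
  ultimately have "s * (inner d2 d2 + inner d1 d1) = 0" by (simp add: algebra_simps)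
  then have "inner d2 d2 + inner d1 d1 = 0" using s by auto
  moreover have "inner d1 d1 \<ge> 0" "inner d2 d2 \<ge> 0" by simp_all
  ultimately have "inner d1 d1 = 0" "inner d2 d2 = 0" by linarith+
  then show ?thesis using xe ye by (simp add: d1_def d2_def)
qed

lemma shp: "shifted_inv A \<i> 1 w = cpx K (\<lambda>x. - R x) w"
  unfolding shifted_inv_def
proof (rule the_equality)
  obtain w1 w2 where we: "w = (w1, w2)" by (cases w)
  let ?x = "cpx K (\<lambda>x. - R x) w"
  have xe: "?x = (K w1 + R w2, K w2 - R w1)" by (simp add: cpx_def we)
  have KD: "K u \<in> D" for u using R_prop by (simp add: K_def)
  have xD: "?x \<in> D \<times> D" unfolding xe using KD R_prop Dadd Ddiff by auto
  have T1: "T (K w1 + R w2) = T (K w1) + K w2" using addT KD R_prop by (simp add: K_def)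
  have T2: "T (K w2 - R w1) = T (K w2) - K w1" using Tdiff KD R_prop by (simp add: K_def)
  have TK: "T (K u) = u - R u" for u using TT_R by (simp add: K_def)
  have "cmul \<i> ?x + 1 *\<^sub>R cext T ?x = w"
    unfolding xe by (simp add: cmul_i cext_def T1 T2 TK we prod_eq_iff algebra_simps)
  then show "?x \<in> D \<times> D \<and> cmul \<i> ?x + 1 *\<^sub>R cext T ?x = w" using xD by simp
  fix y assume "y \<in> D \<times> D \<and> cmul \<i> y + 1 *\<^sub>R cext T y = w"
  then show "y = ?x" using shifted_unique[of 1 y w ?x] xD \<open>cmul \<i> ?x + 1 *\<^sub>R cext T ?x = w\<close> by auto
qed

lemma shm: "shifted_inv A \<i> (-1) w = cpx (\<lambda>x. - K x) (\<lambda>x. - R x) w"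
  unfolding shifted_inv_def
proof (rule the_equality)
  obtain w1 w2 where we: "w = (w1, w2)" by (cases w)
  let ?x = "cpx (\<lambda>x. - K x) (\<lambda>x. - R x) w"
  have xe: "?x = (- K w1 + R w2, - K w2 - R w1)" by (simp add: cpx_def we)
  have KD: "K u \<in> D" for u using R_prop by (simp add: K_def)
  have mKD: "- K u \<in> D" for u using Dsc[OF KD, of "-1"] by simp
  have "- K w1 + R w2 \<in> D" using Dadd[OF mKD R_prop(1)] .
  moreover have "- K w2 - R w1 \<in> D" using Ddiff[OF mKD R_prop(1)] .
  ultimately have xD: "?x \<in> D \<times> D" unfolding xe by blast
  have TmK: "T (- K u) = - T (K u)" for u using scT[OF KD, of "-1"] by simp
  have T1: "T (- K w1 + R w2) = - T (K w1) + K w2"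
    by (rule trans[OF addT[OF mKD R_prop(1)]]) (simp add: TmK K_def[symmetric])
  have T2: "T (- K w2 - R w1) = - T (K w2) - K w1"
    by (rule trans[OF Tdiff[OF mKD R_prop(1)]]) (simp add: TmK K_def[symmetric])
  have TK: "T (K u) = u - R u" for u using TT_R by (simp add: K_def)
  have c: "cext T ?x = (- T (K w1) + K w2, - T (K w2) - K w1)"
    unfolding xe cext_def fst_conv snd_conv T1 T2 ..
  have "cmul \<i> ?x + (-1) *\<^sub>R cext T ?x = w"
    unfolding c unfolding xe by (simp add: cmul_i TK we prod_eq_iff algebra_simps)
  then show "?x \<in> D \<times> D \<and> cmul \<i> ?x + (-1) *\<^sub>R cext T ?x = w" using xD by simp
  fix y assume "y \<in> D \<times> D \<and> cmul \<i> y + (-1) *\<^sub>R cext T y = w"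
  then show "y = ?x" using shifted_unique[of "-1" y w ?x] xD \<open>cmul \<i> ?x + (-1) *\<^sub>R cext T ?x = w\<close> by auto
qed

lemma shp_calc: "shifted_inv A \<i> 1 w = calc rp Psi w"
proof -
  have "rcalc (\<lambda>t. Re (rp t)) Psi = K"
    by (rule ext) (simp add: rp_def K_calc mult.commute)
  moreover have "rcalc (\<lambda>t. Im (rp t)) Psi = (\<lambda>x. - R x)"
  proof (rule ext)
    fix x
    have "rcalc (\<lambda>t. Im (rp t)) Psi x = rcalc (\<lambda>t. (-1) * (1 - t^2)) Psi x" by (simp add: rp_def)
    also have "\<dots> = (-1) *\<^sub>R rcalc (\<lambda>t. 1 - t^2) Psi x" by (rule Pc.rc_scale) (intro continuous_intros)
    also have "\<dots> = - R x" by (simp add: R_calc)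
    finally show "rcalc (\<lambda>t. Im (rp t)) Psi x = - R x" .
  qed
  ultimately show ?thesis by (simp add: calc_def shp)
qed

lemma shm_calc: "shifted_inv A \<i> (-1) w = calc rm Psi w"
proof -
  have "rcalc (\<lambda>t. Re (rm t)) Psi = (\<lambda>x. - K x)"
  proof (rule ext)
    fix x
    have "rcalc (\<lambda>t. Re (rm t)) Psi x = rcalc (\<lambda>t. (-1) * (sqf t * t)) Psi x" by (simp add: rm_def mult.commute)
    also have "\<dots> = (-1) *\<^sub>R rcalc (\<lambda>t. sqf t * t) Psi x" by (rule Pc.rc_scale) (intro continuous_intros sqf_cont)
    also have "\<dots> = - K x" by (simp add: K_calc)
    finally show "rcalc (\<lambda>t. Re (rm t)) Psi x = - K x" .
  qed
  moreover have "rcalc (\<lambda>t. Im (rm t)) Psi = (\<lambda>x. - R x)"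
  proof (rule ext)
    fix x
    have "rcalc (\<lambda>t. Im (rm t)) Psi x = rcalc (\<lambda>t. (-1) * (1 - t^2)) Psi x" by (simp add: rm_def)
    also have "\<dots> = (-1) *\<^sub>R rcalc (\<lambda>t. 1 - t^2) Psi x" by (rule Pc.rc_scale) (intro continuous_intros)
    also have "\<dots> = - R x" by (simp add: R_calc)
    finally show "rcalc (\<lambda>t. Im (rm t)) Psi x = - R x" .
  qed
  ultimately show ?thesis by (simp add: calc_def shm)
qed

end

lemma approx_ext:
  assumes f: "f \<in> algA" and a: "\<And>l. cmod (poly q (complex_of_real (psi l)) - f l) \<le> e"
    and t: "t \<in> {-1..1}"
  shows "cmod (poly q (complex_of_real t) - ext f t) \<le> e"
proof -
  obtain Lt where Lt: "(f \<longlongrightarrow> Lt) at_top" using f by (auto simp: algA_def)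
  obtain Lb where Lb: "(f \<longlongrightarrow> Lb) at_bot" using f by (auto simp: algA_def)
  have pc: "isCont (\<lambda>s. poly q (complex_of_real s)) s" for s by (intro continuous_intros)
  consider "t = 1" | "t = -1" | "-1 < t \<and> t < 1" using t by fastforce
  then show ?thesis
  proof cases
    case 1
    have "(psi \<longlongrightarrow> 1) at_top" unfolding psi_def[abs_def] by (rule lim_psi_top)
    then have pl: "((\<lambda>l. poly q (complex_of_real (psi l))) \<longlongrightarrow> poly q (complex_of_real 1)) at_top"
      by (rule isCont_tendsto_compose[OF pc])
    have l: "((\<lambda>l. cmod (poly q (complex_of_real (psi l)) - f l)) \<longlongrightarrow> cmod (poly q (complex_of_real 1) - Lt)) at_top"
      using tendsto_norm[OF tendsto_diff[OF pl Lt]] .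
    have "cmod (poly q (complex_of_real 1) - Lt) \<le> e"
      by (rule tendsto_le[OF trivial_limit_at_top_linorder tendsto_const l]) (simp add: a)
    then show ?thesis using 1 ext_top[OF Lt] by simp
  next
    case 2
    have "(psi \<longlongrightarrow> -1) at_bot" unfolding psi_def[abs_def] by (rule lim_psi_bot)
    then have pl: "((\<lambda>l. poly q (complex_of_real (psi l))) \<longlongrightarrow> poly q (complex_of_real (-1))) at_bot"
      by (rule isCont_tendsto_compose[OF pc])
    have l: "((\<lambda>l. cmod (poly q (complex_of_real (psi l)) - f l)) \<longlongrightarrow> cmod (poly q (complex_of_real (-1)) - Lb)) at_bot"
      using tendsto_norm[OF tendsto_diff[OF pl Lb]] .
    have "cmod (poly q (complex_of_real (-1)) - Lb) \<le> e"
      by (rule tendsto_le[OF trivial_limit_at_bot_linorder tendsto_const l]) (simp add: a)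
    then show ?thesis using 2 ext_bot[OF Lb] by simp
  next
    case 3
    then have "psi (psinv t) = t" by (simp add: psi_psinv)
    then show ?thesis using a[of "psinv t"] ext_psi[of f "psinv t"] by simp
  qed
qed

context sadj begin

interpretation Pc: cb Psi by (rule Psi_cb)

lemma fc_conv:
  assumes f: "f \<in> algA"
    and p: "\<forall>e>0. \<forall>\<^sub>F k in sequentially. \<forall>l. cmod (poly (p k) (complex_of_real (psi l)) - f l) < e"
  shows "(\<lambda>k. onorm (\<lambda>x. poly_op (p k) (cext (riesz A)) x - calc (ext f) Psi x)) \<longlonglongrightarrow> 0"
proof -
  have hc: "continuous_on {-1..1} (ext f)" by (rule ext_cont[OF f])
  have pcont: "continuous_on {-1..1} (\<lambda>t. poly q (complex_of_real t))" for q by (intro continuous_intros)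
  have b: "onorm (\<lambda>x. poly_op q (cext (riesz A)) x - calc (ext f) Psi x) \<le> e"
    if q: "\<And>l. cmod (poly q (complex_of_real (psi l)) - f l) \<le> e" for q e
  proof -
    have eq: "(\<lambda>x. poly_op q (cext (riesz A)) x - calc (ext f) Psi x) = calc (\<lambda>t. poly q (complex_of_real t) - ext f t) Psi"
      by (rule ext) (simp add: Psi_riesz Pc.poly_op_calc Pc.calc_diff[OF pcont hc])
    show ?thesis unfolding eq
      by (rule Pc.calc_onorm[OF continuous_on_diff[OF pcont hc]]) (rule approx_ext[OF f q])
  qed
  show ?thesis
  proof (rule LIMSEQ_I)
    fix r :: real assume r: "r > 0"
    have "\<forall>\<^sub>F k in sequentially. \<forall>l. cmod (poly (p k) (complex_of_real (psi l)) - f l) < r / 2"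
      using p half_gt_zero[OF r] by blast
    then obtain N where N: "\<And>k. k \<ge> N \<Longrightarrow> \<forall>l. cmod (poly (p k) (complex_of_real (psi l)) - f l) < r / 2"
      unfolding eventually_sequentially by blast
    show "\<exists>N. \<forall>k\<ge>N. norm (onorm (\<lambda>x. poly_op (p k) (cext (riesz A)) x - calc (ext f) Psi x) - 0) < r"
    proof (intro exI[of _ N] allI impI)
      fix k assume k: "k \<ge> N"
      have le: "onorm (\<lambda>x. poly_op (p k) (cext (riesz A)) x - calc (ext f) Psi x) \<le> r / 2"
        by (rule b) (use N[OF k] in \<open>auto intro: less_imp_le\<close>)
      have bl: "bounded_linear (\<lambda>x. poly_op (p k) (cext (riesz A)) x - calc (ext f) Psi x)"
        by (intro bounded_linear_sub) (auto simp: Psi_riesz Pc.poly_op_calc[abs_def] intro!: Pc.calc_bl pcont hc)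
      have "0 \<le> onorm (\<lambda>x. poly_op (p k) (cext (riesz A)) x - calc (ext f) Psi x)" by (rule onorm_pos_le[OF bl])
      then show "norm (onorm (\<lambda>x. poly_op (p k) (cext (riesz A)) x - calc (ext f) Psi x) - 0) < r"
        using le r by simp
    qed
  qed
qed

lemma fcalc_eq:
  assumes f: "f \<in> algA"
  shows "fcalc f A = calc (ext f) Psi"
  unfolding fcalc_def
proof (rule the_equality)
  have hc: "continuous_on {-1..1} (ext f)" by (rule ext_cont[OF f])
  show "bounded_linear (calc (ext f) Psi) \<and>
    (\<forall>p. (\<forall>e>0. \<forall>\<^sub>F k in sequentially. \<forall>l. cmod (poly (p k) (complex_of_real (psi l)) - f l) < e) \<longrightarrow>
      (\<lambda>k. onorm (\<lambda>x. poly_op (p k) (cext (riesz A)) x - calc (ext f) Psi x)) \<longlonglongrightarrow> 0)"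
    using Pc.calc_bl[OF hc] fc_conv[OF f] by blast
next
  fix B' assume B': "bounded_linear B' \<and>
    (\<forall>p. (\<forall>e>0. \<forall>\<^sub>F k in sequentially. \<forall>l. cmod (poly (p k) (complex_of_real (psi l)) - f l) < e) \<longrightarrow>
      (\<lambda>k. onorm (\<lambda>x. poly_op (p k) (cext (riesz A)) x - B' x)) \<longlonglongrightarrow> 0)"
  have hc: "continuous_on {-1..1} (ext f)" by (rule ext_cont[OF f])
  have cr: "continuous_on {-1..1} (\<lambda>t. Re (ext f t))" and ci: "continuous_on {-1..1} (\<lambda>t. Im (ext f t))"
    by (intro continuous_intros hc)+
  define p where "p k = map_poly complex_of_real (papprox (\<lambda>t. Re (ext f t)) k) + smult \<i> (map_poly complex_of_real (papprox (\<lambda>t. Im (ext f t)) k))" for k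
  have pe: "cmod (poly (p k) (complex_of_real (psi l)) - f l) \<le> 2 / (real k + 1)" for k l
  proof -
    have t: "psi l \<in> {-1..1}" using psi_bounds[of l] by auto
    let ?a = "poly (papprox (\<lambda>t. Re (ext f t)) k) (psi l)" and ?b = "poly (papprox (\<lambda>t. Im (ext f t)) k) (psi l)"
    have "poly (p k) (complex_of_real (psi l)) = complex_of_real ?a + \<i> * complex_of_real ?b"
      by (simp add: p_def ev_real)
    moreover have "f l = ext f (psi l)" by (simp add: ext_psi)
    ultimately have "poly (p k) (complex_of_real (psi l)) - f l = Complex (?a - Re (ext f (psi l))) (?b - Im (ext f (psi l)))"
      by (simp add: complex_eq_iff)
    moreover have "\<bar>?a - Re (ext f (psi l))\<bar> \<le> 1 / (real k + 1)" by (rule papprox_ok[OF cr t])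
    moreover have "\<bar>?b - Im (ext f (psi l))\<bar> \<le> 1 / (real k + 1)" by (rule papprox_ok[OF ci t])
    ultimately show ?thesis using cmod_le[of "Complex (?a - Re (ext f (psi l))) (?b - Im (ext f (psi l)))"] by simp
  qed
  have pu: "\<forall>e>0. \<forall>\<^sub>F k in sequentially. \<forall>l. cmod (poly (p k) (complex_of_real (psi l)) - f l) < e"
  proof (intro allI impI)
    fix e :: real assume e: "e > 0"
    obtain N :: nat where N: "2 / e < real N" using reals_Archimedean2 by blast
    show "\<forall>\<^sub>F k in sequentially. \<forall>l. cmod (poly (p k) (complex_of_real (psi l)) - f l) < e"
      unfolding eventually_sequentially
    proof (intro exI[of _ N] allI impI)
      fix k l assume k: "N \<le> k"
      have "2 / (real k + 1) < e" using N k e by (simp add: field_simps) (smt (verit) of_nat_mono mult_left_mono)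
      then show "cmod (poly (p k) (complex_of_real (psi l)) - f l) < e" using pe[of k l] by linarith
    qed
  qed
  have l1: "(\<lambda>k. onorm (\<lambda>x. poly_op (p k) (cext (riesz A)) x - B' x)) \<longlonglongrightarrow> 0" using B' pu by blast
  have l2: "(\<lambda>k. onorm (\<lambda>x. poly_op (p k) (cext (riesz A)) x - calc (ext f) Psi x)) \<longlonglongrightarrow> 0" by (rule fc_conv[OF f pu])
  have blP: "bounded_linear (poly_op (p k) (cext (riesz A)))" for k
    by (auto simp: Psi_riesz Pc.poly_op_calc[abs_def] intro!: Pc.calc_bl continuous_intros)
  have blB: "bounded_linear B'" using B' by blast
  have blC: "bounded_linear (calc (ext f) Psi)" by (rule Pc.calc_bl[OF hc])
  have blD: "bounded_linear (\<lambda>x. B' x - calc (ext f) Psi x)" by (intro bounded_linear_sub blB blC)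
  have le: "onorm (\<lambda>x. B' x - calc (ext f) Psi x) \<le>
      onorm (\<lambda>x. poly_op (p k) (cext (riesz A)) x - B' x) + onorm (\<lambda>x. poly_op (p k) (cext (riesz A)) x - calc (ext f) Psi x)" for k
  proof -
    have e: "(\<lambda>x. B' x - calc (ext f) Psi x) = (\<lambda>x. - (poly_op (p k) (cext (riesz A)) x - B' x) + (poly_op (p k) (cext (riesz A)) x - calc (ext f) Psi x))"
      by (rule ext) (simp add: algebra_simps)
    have b1: "bounded_linear (\<lambda>x. - (poly_op (p k) (cext (riesz A)) x - B' x))"
      by (intro bounded_linear_minus bounded_linear_sub blP blB)
    have b2: "bounded_linear (\<lambda>x. poly_op (p k) (cext (riesz A)) x - calc (ext f) Psi x)"
      by (intro bounded_linear_sub blP blC)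
    have "onorm (\<lambda>x. B' x - calc (ext f) Psi x) \<le> onorm (\<lambda>x. - (poly_op (p k) (cext (riesz A)) x - B' x)) + onorm (\<lambda>x. poly_op (p k) (cext (riesz A)) x - calc (ext f) Psi x)"
      unfolding e by (rule onorm_triangle[OF b1 b2])
    moreover have "onorm (\<lambda>x. - (poly_op (p k) (cext (riesz A)) x - B' x)) = onorm (\<lambda>x. poly_op (p k) (cext (riesz A)) x - B' x)"
      by (rule onorm_neg)
    ultimately show ?thesis by simp
  qed
  have "onorm (\<lambda>x. B' x - calc (ext f) Psi x) \<le> 0"
  proof (rule tendsto_le[OF sequentially_bot _ tendsto_const])
    show "(\<lambda>k. onorm (\<lambda>x. poly_op (p k) (cext (riesz A)) x - B' x) + onorm (\<lambda>x. poly_op (p k) (cext (riesz A)) x - calc (ext f) Psi x)) \<longlonglongrightarrow> 0"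
      using tendsto_add[OF l1 l2] by simp
    show "\<forall>\<^sub>F k in sequentially. onorm (\<lambda>x. B' x - calc (ext f) Psi x) \<le> onorm (\<lambda>x. poly_op (p k) (cext (riesz A)) x - B' x) + onorm (\<lambda>x. poly_op (p k) (cext (riesz A)) x - calc (ext f) Psi x)"
      by (intro always_eventually allI le)
  qed
  then have "onorm (\<lambda>x. B' x - calc (ext f) Psi x) = 0" using onorm_pos_le[OF blD] by linarith
  then have "\<forall>x. B' x - calc (ext f) Psi x = 0" using onorm_eq_0[OF blD] by blast
  then show "B' = calc (ext f) Psi" by (auto simp: fun_eq_iff)
qed

end

lemma squeeze0:
  fixes c a :: "nat \<Rightarrow> real"
  assumes "\<And>n. 0 \<le> c n" "\<And>n. c n \<le> a n" "a \<longlonglongrightarrow> 0"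
  shows "c \<longlonglongrightarrow> 0"
  by (rule tendsto_sandwich[where f="\<lambda>n. 0" and h=a]) (use assms in auto)

lemma (in cb) rc_onorm:
  assumes h: "continuous_on {-1..1} h" and M: "\<And>t. t \<in> {-1..1} \<Longrightarrow> \<bar>h t\<bar> \<le> M"
  shows "onorm (rcalc h B) \<le> M"
proof (rule onorm_bound)
  have "\<bar>h 0\<bar> \<le> M" by (rule M) simp
  then show "0 \<le> M" by linarith
qed (rule rc_bound[OF h M])

locale cbseq =
  fixes Bs :: "nat \<Rightarrow> 'a::{real_inner,complete_space} \<Rightarrow> 'a" and B :: "'a \<Rightarrow> 'a"
  assumes cbs: "\<And>n. cb (Bs n)" and cbB: "cb B"
begin

definition gf :: "(real \<Rightarrow> real) \<Rightarrow> bool" where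
  "gf u \<longleftrightarrow> continuous_on {-1..1} u \<and> (\<lambda>n. onorm (\<lambda>x. rcalc u (Bs n) x - rcalc u B x)) \<longlonglongrightarrow> 0"

lemma blr: "continuous_on {-1..1} u \<Longrightarrow> bounded_linear (rcalc u (Bs n))"
  using cb.rc_bl[OF cbs] by blast
lemma blr0: "continuous_on {-1..1} u \<Longrightarrow> bounded_linear (rcalc u B)"
  using cb.rc_bl[OF cbB] by blast
lemma bld: "continuous_on {-1..1} u \<Longrightarrow> bounded_linear (\<lambda>x. rcalc u (Bs n) x - rcalc u B x)"
  by (intro bounded_linear_sub blr blr0)

lemma gf_add:
  assumes "gf u" "gf v" shows "gf (\<lambda>t. u t + v t)"
proof -
  have u: "continuous_on {-1..1} u" and v: "continuous_on {-1..1} v" using assms gf_def by auto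
  have e: "(\<lambda>x. rcalc (\<lambda>t. u t + v t) (Bs n) x - rcalc (\<lambda>t. u t + v t) B x)
      = (\<lambda>x. (rcalc u (Bs n) x - rcalc u B x) + (rcalc v (Bs n) x - rcalc v B x))" for n
    by (rule ext) (simp add: cb.rc_add[OF cbs u v] cb.rc_add[OF cbB u v])
  have le: "onorm (\<lambda>x. rcalc (\<lambda>t. u t + v t) (Bs n) x - rcalc (\<lambda>t. u t + v t) B x)
      \<le> onorm (\<lambda>x. rcalc u (Bs n) x - rcalc u B x) + onorm (\<lambda>x. rcalc v (Bs n) x - rcalc v B x)" for n
    unfolding e by (rule onorm_triangle[OF bld[OF u] bld[OF v]])
  have "(\<lambda>n. onorm (\<lambda>x. rcalc (\<lambda>t. u t + v t) (Bs n) x - rcalc (\<lambda>t. u t + v t) B x)) \<longlonglongrightarrow> 0"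
  proof (rule squeeze0[OF _ le])
    show "0 \<le> onorm (\<lambda>x. rcalc (\<lambda>t. u t + v t) (Bs n) x - rcalc (\<lambda>t. u t + v t) B x)" for n
      by (rule onorm_pos_le[OF bld]) (intro continuous_intros u v)
    show "(\<lambda>n. onorm (\<lambda>x. rcalc u (Bs n) x - rcalc u B x) + onorm (\<lambda>x. rcalc v (Bs n) x - rcalc v B x)) \<longlonglongrightarrow> 0"
      using tendsto_add[OF conjunct2[OF assms(1)[unfolded gf_def]] conjunct2[OF assms(2)[unfolded gf_def]]] by simp
  qed
  then show ?thesis unfolding gf_def by (intro conjI continuous_intros u v)
qed

lemma gf_const: "gf (\<lambda>t. c)"
proof -
  have "(\<lambda>x. rcalc (\<lambda>t. c) (Bs n) x - rcalc (\<lambda>t. c) B x) = (\<lambda>x. 0)" for n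
    by (rule ext) (simp add: cb.rc_const[OF cbs] cb.rc_const[OF cbB])
  then show ?thesis unfolding gf_def by (simp add: onorm_zero)
qed

lemma gf_mult:
  assumes "gf u" "gf v" shows "gf (\<lambda>t. u t * v t)"
proof -
  have u: "continuous_on {-1..1} u" and v: "continuous_on {-1..1} v" using assms gf_def by auto
  obtain Mu where Mu: "Mu \<ge> 0" "\<And>t. t \<in> {-1..1} \<Longrightarrow> \<bar>u t\<bar> \<le> Mu" using cont_bounded[OF u] by blast
  define a where "a n = onorm (\<lambda>x. rcalc u (Bs n) x - rcalc u B x)" for n
  define b where "b n = onorm (\<lambda>x. rcalc v (Bs n) x - rcalc v B x)" for n
  have a: "a \<longlonglongrightarrow> 0" and b: "b \<longlonglongrightarrow> 0" using assms unfolding gf_def a_def b_def by auto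
  have e: "(\<lambda>x. rcalc (\<lambda>t. u t * v t) (Bs n) x - rcalc (\<lambda>t. u t * v t) B x)
      = (\<lambda>x. rcalc u (Bs n) (rcalc v (Bs n) x - rcalc v B x) + (rcalc u (Bs n) (rcalc v B x) - rcalc u B (rcalc v B x)))" for n
  proof (rule ext)
    fix x
    have "rcalc u (Bs n) (rcalc v (Bs n) x - rcalc v B x) = rcalc u (Bs n) (rcalc v (Bs n) x) - rcalc u (Bs n) (rcalc v B x)"
      using blr[OF u] by (simp add: linear_diff bounded_linear.linear)
    then show "rcalc (\<lambda>t. u t * v t) (Bs n) x - rcalc (\<lambda>t. u t * v t) B x
      = rcalc u (Bs n) (rcalc v (Bs n) x - rcalc v B x) + (rcalc u (Bs n) (rcalc v B x) - rcalc u B (rcalc v B x))"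
      by (simp add: cb.rc_mult[OF cbs u v] cb.rc_mult[OF cbB u v])
  qed
  have b1: "bounded_linear (\<lambda>x. rcalc u (Bs n) (rcalc v (Bs n) x - rcalc v B x))" for n
    using bounded_linear_compose[OF blr[OF u] bld[OF v]] .
  have b2: "bounded_linear (\<lambda>x. rcalc u (Bs n) (rcalc v B x) - rcalc u B (rcalc v B x))" for n
    using bounded_linear_compose[OF bld[OF u] blr0[OF v]] .
  have le: "onorm (\<lambda>x. rcalc (\<lambda>t. u t * v t) (Bs n) x - rcalc (\<lambda>t. u t * v t) B x) \<le> Mu * b n + a n * onorm (rcalc v B)" for n
  proof -
    have "onorm (\<lambda>x. rcalc (\<lambda>t. u t * v t) (Bs n) x - rcalc (\<lambda>t. u t * v t) B x)
        \<le> onorm (\<lambda>x. rcalc u (Bs n) (rcalc v (Bs n) x - rcalc v B x)) + onorm (\<lambda>x. rcalc u (Bs n) (rcalc v B x) - rcalc u B (rcalc v B x))"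
      unfolding e by (rule onorm_triangle[OF b1 b2])
    also have "onorm (\<lambda>x. rcalc u (Bs n) (rcalc v (Bs n) x - rcalc v B x)) \<le> onorm (rcalc u (Bs n)) * b n"
      using onorm_compose[OF blr[OF u] bld[OF v]] by (simp add: b_def comp_def)
    also have "onorm (rcalc u (Bs n)) \<le> Mu" by (rule cb.rc_onorm[OF cbs u Mu(2)])
    also have "onorm (\<lambda>x. rcalc u (Bs n) (rcalc v B x) - rcalc u B (rcalc v B x)) \<le> a n * onorm (rcalc v B)"
      using onorm_compose[OF bld[OF u] blr0[OF v]] by (simp add: a_def comp_def)
    finally show ?thesis using onorm_pos_le[OF bld[OF v]] b_def by (simp add: mult_right_mono)
  qed
  have "(\<lambda>n. onorm (\<lambda>x. rcalc (\<lambda>t. u t * v t) (Bs n) x - rcalc (\<lambda>t. u t * v t) B x)) \<longlonglongrightarrow> 0"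
  proof (rule squeeze0[OF _ le])
    show "0 \<le> onorm (\<lambda>x. rcalc (\<lambda>t. u t * v t) (Bs n) x - rcalc (\<lambda>t. u t * v t) B x)" for n
      by (rule onorm_pos_le[OF bld]) (intro continuous_intros u v)
    show "(\<lambda>n. Mu * b n + a n * onorm (rcalc v B)) \<longlonglongrightarrow> 0"
      using tendsto_add[OF tendsto_mult[OF tendsto_const b] tendsto_mult[OF a tendsto_const]] by simp
  qed
  then show ?thesis unfolding gf_def by (intro conjI continuous_intros u v)
qed

lemma gf_approx:
  assumes u: "continuous_on {-1..1} u"
    and ap: "\<And>e. e > 0 \<Longrightarrow> \<exists>g. gf g \<and> (\<forall>t\<in>{-1..1}. \<bar>u t - g t\<bar> < e)"
  shows "gf u"
proof -
  have "(\<lambda>n. onorm (\<lambda>x. rcalc u (Bs n) x - rcalc u B x)) \<longlonglongrightarrow> 0"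
  proof (rule LIMSEQ_I)
    fix r :: real assume r: "r > 0"
    obtain g where g: "gf g" "\<And>t. t \<in> {-1..1} \<Longrightarrow> \<bar>u t - g t\<bar> < r / 4"
      using ap[of "r/4"] r by auto
    have gc: "continuous_on {-1..1} g" using g gf_def by auto
    have dc: "continuous_on {-1..1} (\<lambda>t. u t - g t)" by (intro continuous_intros u gc)
    have dM: "\<And>t. t \<in> {-1..1} \<Longrightarrow> \<bar>u t - g t\<bar> \<le> r / 4" using g(2) less_imp_le by blast
    have lg: "(\<lambda>n. onorm (\<lambda>x. rcalc g (Bs n) x - rcalc g B x)) \<longlonglongrightarrow> 0" using g(1) unfolding gf_def by blast
    have r4: "r / 4 > 0" using r by simp
    obtain N where N0: "\<forall>n\<ge>N. norm (onorm (\<lambda>x. rcalc g (Bs n) x - rcalc g B x) - 0) < r / 4"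
      using LIMSEQ_D[OF lg r4] by blast
    have N: "onorm (\<lambda>x. rcalc g (Bs n) x - rcalc g B x) < r / 4" if "n \<ge> N" for n
    proof -
      have "norm (onorm (\<lambda>x. rcalc g (Bs n) x - rcalc g B x) - 0) < r / 4" using N0 that by blast
      then have "\<bar>onorm (\<lambda>x. rcalc g (Bs n) x - rcalc g B x)\<bar> < r / 4" by simp
      then show ?thesis using abs_ge_self[of "onorm (\<lambda>x. rcalc g (Bs n) x - rcalc g B x)"] by linarith
    qed
    show "\<exists>N. \<forall>n\<ge>N. norm (onorm (\<lambda>x. rcalc u (Bs n) x - rcalc u B x) - 0) < r"
    proof (intro exI[of _ N] allI impI)
      fix n assume n: "n \<ge> N"
      have e: "(\<lambda>x. rcalc u (Bs n) x - rcalc u B x) = (\<lambda>x. (rcalc (\<lambda>t. u t - g t) (Bs n) x + (rcalc g (Bs n) x - rcalc g B x)) + (- rcalc (\<lambda>t. u t - g t) B x))"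
        by (rule ext) (simp add: cb.rc_diff[OF cbs u gc] cb.rc_diff[OF cbB u gc])
      have b1: "bounded_linear (rcalc (\<lambda>t. u t - g t) (Bs n))" by (rule blr[OF dc])
      have b2: "bounded_linear (\<lambda>x. rcalc g (Bs n) x - rcalc g B x)" by (rule bld[OF gc])
      have b3: "bounded_linear (\<lambda>x. - rcalc (\<lambda>t. u t - g t) B x)" by (intro bounded_linear_minus blr0[OF dc])
      have b12: "bounded_linear (\<lambda>x. rcalc (\<lambda>t. u t - g t) (Bs n) x + (rcalc g (Bs n) x - rcalc g B x))"
        by (intro bounded_linear_add b1 b2)
      have t1: "onorm (\<lambda>x. rcalc u (Bs n) x - rcalc u B x) \<le> onorm (\<lambda>x. rcalc (\<lambda>t. u t - g t) (Bs n) x + (rcalc g (Bs n) x - rcalc g B x)) + onorm (\<lambda>x. - rcalc (\<lambda>t. u t - g t) B x)"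
        unfolding e by (rule onorm_triangle[OF b12 b3])
      have t2: "onorm (\<lambda>x. rcalc (\<lambda>t. u t - g t) (Bs n) x + (rcalc g (Bs n) x - rcalc g B x)) \<le> onorm (rcalc (\<lambda>t. u t - g t) (Bs n)) + onorm (\<lambda>x. rcalc g (Bs n) x - rcalc g B x)"
        by (rule onorm_triangle[OF b1 b2])
      have t3: "onorm (\<lambda>x. - rcalc (\<lambda>t. u t - g t) B x) = onorm (rcalc (\<lambda>t. u t - g t) B)" by (rule onorm_neg)
      have t4: "onorm (rcalc (\<lambda>t. u t - g t) (Bs n)) \<le> r / 4" by (rule cb.rc_onorm[OF cbs dc dM])
      have t5: "onorm (rcalc (\<lambda>t. u t - g t) B) \<le> r / 4" by (rule cb.rc_onorm[OF cbB dc dM])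
      have "onorm (\<lambda>x. rcalc u (Bs n) x - rcalc u B x) < r" using t1 t2 t3 t4 t5 N[OF n] r by linarith
      moreover have "0 \<le> onorm (\<lambda>x. rcalc u (Bs n) x - rcalc u B x)" by (rule onorm_pos_le[OF bld[OF u]])
      ultimately show "norm (onorm (\<lambda>x. rcalc u (Bs n) x - rcalc u B x) - 0) < r" by simp
    qed
  qed
  then show ?thesis unfolding gf_def using u by simp
qed

lemma gf_all:
  assumes sep: "\<And>x y. x \<in> {-1..1} \<Longrightarrow> y \<in> {-1..1} \<Longrightarrow> x \<noteq> y \<Longrightarrow> \<exists>u. gf u \<and> u x \<noteq> u y"
    and u: "continuous_on {-1..1} u"
  shows "gf u"
proof -
  interpret fr: function_ring_on "Collect gf" "{-1..1::real}"
  proof unfold_locales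
    show "compact {-1..1::real}" by simp
  next
    fix f assume "f \<in> Collect gf" then show "continuous_on {-1..1} f" by (simp add: gf_def)
  next
    fix f g assume "f \<in> Collect gf" "g \<in> Collect gf"
    then show "(\<lambda>x. f x + g x) \<in> Collect gf" "(\<lambda>x. f x * g x) \<in> Collect gf"
      by (simp_all add: gf_add gf_mult)
  next
    fix c :: real show "(\<lambda>_. c) \<in> Collect gf" by (simp add: gf_const)
  next
    fix x y :: real assume "x \<in> {-1..1}" "y \<in> {-1..1}" "x \<noteq> y"
    then show "\<exists>f\<in>Collect gf. f x \<noteq> f y" using sep by blast
  qed
  show ?thesis
  proof (rule gf_approx[OF u])
    fix e :: real assume "e > 0"
    then obtain g where "g \<in> Collect gf" "\<forall>x\<in>{-1..1}. \<bar>u x - g x\<bar> < e"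
      using fr.Stone_Weierstrass_basic[OF u] by blast
    then show "\<exists>g. gf g \<and> (\<forall>t\<in>{-1..1}. \<bar>u t - g t\<bar> < e)" by blast
  qed
qed

end

context cbseq begin

lemma Pc_iff:
  assumes h: "continuous_on {-1..1} h"
  shows "((\<lambda>n. onorm (\<lambda>x. calc h (Bs n) x - calc h B x)) \<longlonglongrightarrow> 0) \<longleftrightarrow> gf (\<lambda>t. Re (h t)) \<and> gf (\<lambda>t. Im (h t))"
proof -
  have cr: "continuous_on {-1..1} (\<lambda>t. Re (h t))" and ci: "continuous_on {-1..1} (\<lambda>t. Im (h t))"
    by (intro continuous_intros h)+
  define P where "P n = (\<lambda>x. rcalc (\<lambda>t. Re (h t)) (Bs n) x - rcalc (\<lambda>t. Re (h t)) B x)" for n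
  define Q where "Q n = (\<lambda>x. rcalc (\<lambda>t. Im (h t)) (Bs n) x - rcalc (\<lambda>t. Im (h t)) B x)" for n
  have e: "(\<lambda>x. calc h (Bs n) x - calc h B x) = cpx (P n) (Q n)" for n
    by (rule ext) (simp add: calc_def cpx_diff P_def Q_def)
  have bP: "bounded_linear (P n)" and bQ: "bounded_linear (Q n)" for n
    unfolding P_def Q_def by (rule bld[OF cr], rule bld[OF ci])
  have le1: "onorm (P n) \<le> onorm (cpx (P n) (Q n))" and le2: "onorm (Q n) \<le> onorm (cpx (P n) (Q n))"
    and le3: "onorm (cpx (P n) (Q n)) \<le> onorm (P n) + onorm (Q n)" for n
    using cpx_ge[OF bP bQ] cpx_le[OF bP bQ] by auto
  have pP: "0 \<le> onorm (P n)" and pQ: "0 \<le> onorm (Q n)" for n using onorm_pos_le bP bQ by auto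
  show ?thesis
  proof
    assume l: "(\<lambda>n. onorm (\<lambda>x. calc h (Bs n) x - calc h B x)) \<longlonglongrightarrow> 0"
    then have l': "(\<lambda>n. onorm (cpx (P n) (Q n))) \<longlonglongrightarrow> 0" unfolding e .
    have "(\<lambda>n. onorm (P n)) \<longlonglongrightarrow> 0" by (rule squeeze0[OF pP le1 l'])
    moreover have "(\<lambda>n. onorm (Q n)) \<longlonglongrightarrow> 0" by (rule squeeze0[OF pQ le2 l'])
    ultimately show "gf (\<lambda>t. Re (h t)) \<and> gf (\<lambda>t. Im (h t))"
      unfolding gf_def P_def Q_def using cr ci by simp
  next
    assume g: "gf (\<lambda>t. Re (h t)) \<and> gf (\<lambda>t. Im (h t))"
    then have "(\<lambda>n. onorm (P n)) \<longlonglongrightarrow> 0" "(\<lambda>n. onorm (Q n)) \<longlonglongrightarrow> 0"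
      unfolding gf_def P_def Q_def by auto
    then have "(\<lambda>n. onorm (P n) + onorm (Q n)) \<longlonglongrightarrow> 0" using tendsto_add by fastforce
    then have "(\<lambda>n. onorm (cpx (P n) (Q n))) \<longlonglongrightarrow> 0"
      by (rule squeeze0[rotated 2]) (use le3 onorm_pos_le cpx_bl[OF bP bQ] in auto)
    then show "(\<lambda>n. onorm (\<lambda>x. calc h (Bs n) x - calc h B x)) \<longlonglongrightarrow> 0" unfolding e .
  qed
qed

end

lemma onepsq: "1 + (x::real)^2 \<noteq> 0"
  using add_pos_nonneg[OF zero_less_one zero_le_power2[of x]] by linarith

lemma psi_algA: "(\<lambda>l. complex_of_real (psi l)) \<in> algA"
  unfolding algA_def
proof (intro CollectI conjI)
  show "continuous_on UNIV (\<lambda>l. complex_of_real (psi l))"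
    unfolding psi_def by (intro continuous_intros) (simp add: onepsq)
  have "(psi \<longlongrightarrow> 1) at_top" unfolding psi_def[abs_def] by (rule lim_psi_top)
  then show "\<exists>l. ((\<lambda>l. complex_of_real (psi l)) \<longlongrightarrow> l) at_top" using tendsto_of_real[where 'a=complex] by blast
  have "(psi \<longlongrightarrow> -1) at_bot" unfolding psi_def[abs_def] by (rule lim_psi_bot)
  then show "\<exists>l. ((\<lambda>l. complex_of_real (psi l)) \<longlongrightarrow> l) at_bot" using tendsto_of_real[where 'a=complex] by blast
qed

lemma ext_psi_id: "t \<in> {-1..1} \<Longrightarrow> Re (ext (\<lambda>l. complex_of_real (psi l)) t) = t"
proof -
  assume t: "t \<in> {-1..1}"
  have lt: "((\<lambda>l. complex_of_real (psi l)) \<longlongrightarrow> 1) at_top"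
  proof -
    have "(psi \<longlongrightarrow> 1) at_top" unfolding psi_def[abs_def] by (rule lim_psi_top)
    from tendsto_of_real[OF this, where 'a=complex] show ?thesis by simp
  qed
  have lb: "((\<lambda>l. complex_of_real (psi l)) \<longlongrightarrow> -1) at_bot"
  proof -
    have "(psi \<longlongrightarrow> -1) at_bot" unfolding psi_def[abs_def] by (rule lim_psi_bot)
    from tendsto_of_real[OF this, where 'a=complex] show ?thesis by simp
  qed
  consider "t = 1" | "t = -1" | "-1 < t \<and> t < 1" using t by fastforce
  then show ?thesis
  proof cases
    case 1 then show ?thesis using ext_top[OF lt] by simp
  next
    case 2 then show ?thesis using ext_bot[OF lb] by simp
  next
    case 3 then show ?thesis by (simp add: ext_def psi_psinv)
  qed
qed

theorem proposition1p3:
  fixes As :: "nat \<Rightarrow> ('a::{real_inner,complete_space}) op"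
    and A :: "'a op"
    and \<alpha> :: "real \<Rightarrow> complex"
  assumes "separable_space (euclidean :: 'a topology)"
    and "\<alpha> \<in> algA"
    and "\<forall>\<^sub>F l in at_top. \<alpha> l = 1"
    and "\<forall>\<^sub>F l in at_bot. \<alpha> l = 0"
    and "\<And>n. dsa (As n)"
    and "dsa A"
  shows "((\<lambda>n. riesz_metric (As n) A) \<longlonglongrightarrow> 0
           \<longleftrightarrow> (\<forall>f\<in>algA. (\<lambda>n. onorm (\<lambda>x. fcalc f (As n) x - fcalc f A x)) \<longlonglongrightarrow> 0))
       \<and> ((\<forall>f\<in>algA. (\<lambda>n. onorm (\<lambda>x. fcalc f (As n) x - fcalc f A x)) \<longlonglongrightarrow> 0)
           \<longleftrightarrow> ((\<lambda>n. gap_metric (As n) A) \<longlonglongrightarrow> 0 \<and>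
                (\<lambda>n. onorm (\<lambda>x. fcalc \<alpha> (As n) x - fcalc \<alpha> A x)) \<longlonglongrightarrow> 0))"
proof -
  have sA: "sadj A" using assms(6) by (rule sadj.intro)
  have sAn: "sadj (As n)" for n using assms(5) by (rule sadj.intro)
  define Bs where "Bs n = sadj.Psi (As n)" for n
  define B where "B = sadj.Psi A"
  have cbs: "cb (Bs n)" for n unfolding Bs_def by (rule sadj.Psi_cb[OF sAn])
  have cbB: "cb B" unfolding B_def by (rule sadj.Psi_cb[OF sA])
  interpret cs: cbseq Bs B by (rule cbseq.intro[OF cbs cbB])
  have fc: "fcalc f (As n) = calc (ext f) (Bs n)" if "f \<in> algA" for f n
    unfolding Bs_def by (rule sadj.fcalc_eq[OF sAn that])
  have fc0: "fcalc f A = calc (ext f) B" if "f \<in> algA" for f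
    unfolding B_def by (rule sadj.fcalc_eq[OF sA that])
  have ii_iff: "(\<forall>f\<in>algA. (\<lambda>n. onorm (\<lambda>x. fcalc f (As n) x - fcalc f A x)) \<longlonglongrightarrow> 0)
      \<longleftrightarrow> (\<forall>f\<in>algA. (\<lambda>n. onorm (\<lambda>x. calc (ext f) (Bs n) x - calc (ext f) B x)) \<longlonglongrightarrow> 0)"
    by (simp add: fc fc0)
  have rm_eq: "riesz_metric (As n) A = onorm (\<lambda>x. Bs n x - B x)" for n
    unfolding riesz_metric_def Bs_def B_def sadj.Psi_riesz[OF sAn] sadj.Psi_riesz[OF sA] ..
  have gid_iff: "cs.gf (\<lambda>t. t) \<longleftrightarrow> (\<lambda>n. riesz_metric (As n) A) \<longlonglongrightarrow> 0"
    unfolding cs.gf_def rm_eq by (simp add: cb.rc_id[OF cbs] cb.rc_id[OF cbB] continuous_on_id)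
  have all_from_id: "cs.gf (\<lambda>t. t) \<Longrightarrow> continuous_on {-1..1} u \<Longrightarrow> cs.gf u" for u
    by (rule cs.gf_all) auto
  have i_ii: "(\<lambda>n. riesz_metric (As n) A) \<longlonglongrightarrow> 0 \<Longrightarrow> (\<forall>f\<in>algA. (\<lambda>n. onorm (\<lambda>x. fcalc f (As n) x - fcalc f A x)) \<longlonglongrightarrow> 0)"
  proof -
    assume "(\<lambda>n. riesz_metric (As n) A) \<longlonglongrightarrow> 0"
    then have gid: "cs.gf (\<lambda>t. t)" using gid_iff by simp
    show ?thesis unfolding ii_iff
    proof
      fix f assume f: "f \<in> algA"
      have hc: "continuous_on {-1..1} (ext f)" by (rule ext_cont[OF f])
      show "(\<lambda>n. onorm (\<lambda>x. calc (ext f) (Bs n) x - calc (ext f) B x)) \<longlonglongrightarrow> 0"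
        unfolding cs.Pc_iff[OF hc] by (intro conjI all_from_id[OF gid] continuous_intros hc)
    qed
  qed
  have ii_i: "(\<forall>f\<in>algA. (\<lambda>n. onorm (\<lambda>x. fcalc f (As n) x - fcalc f A x)) \<longlonglongrightarrow> 0) \<Longrightarrow> (\<lambda>n. riesz_metric (As n) A) \<longlonglongrightarrow> 0"
  proof -
    assume "\<forall>f\<in>algA. (\<lambda>n. onorm (\<lambda>x. fcalc f (As n) x - fcalc f A x)) \<longlonglongrightarrow> 0"
    then have "(\<lambda>n. onorm (\<lambda>x. calc (ext (\<lambda>l. complex_of_real (psi l))) (Bs n) x - calc (ext (\<lambda>l. complex_of_real (psi l))) B x)) \<longlonglongrightarrow> 0"
      unfolding ii_iff using psi_algA by blast
    then have g: "cs.gf (\<lambda>t. Re (ext (\<lambda>l. complex_of_real (psi l)) t))"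
      using cs.Pc_iff[OF ext_cont[OF psi_algA]] by blast
    have "cs.gf (\<lambda>t. t)"
    proof -
      have c: "continuous_on {-1..1} (\<lambda>t. Re (ext (\<lambda>l. complex_of_real (psi l)) t))"
        by (intro continuous_intros ext_cont[OF psi_algA])
      have r: "rcalc (\<lambda>t. Re (ext (\<lambda>l. complex_of_real (psi l)) t)) X = rcalc (\<lambda>t. t) X" if "cb X" for X
        by (rule ext, rule cb.rc_congr[OF that continuous_on_id]) (simp add: ext_psi_id)
      have e: "rcalc (\<lambda>t. Re (ext (\<lambda>l. complex_of_real (psi l)) t)) (Bs n) = rcalc (\<lambda>t. t) (Bs n)" for n
        by (rule r[OF cbs])
      have e0: "rcalc (\<lambda>t. Re (ext (\<lambda>l. complex_of_real (psi l)) t)) B = rcalc (\<lambda>t. t) B"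
        by (rule r[OF cbB])
      show ?thesis using g unfolding cs.gf_def e e0 by (simp add: continuous_on_id)
    qed
    then show ?thesis using gid_iff by simp
  qed
  have gap_eq: "gap_metric (As n) A = onorm (\<lambda>x. calc rp (Bs n) x - calc rp B x) + onorm (\<lambda>x. calc rm (Bs n) x - calc rm B x)" for n
    unfolding gap_metric_def Bs_def B_def
    by (simp add: sadj.shp_calc[OF sAn] sadj.shp_calc[OF sA] sadj.shm_calc[OF sAn] sadj.shm_calc[OF sA])
  have rpc: "continuous_on {-1..1} rp" and rmc: "continuous_on {-1..1} rm" by (rule rp_cont rm_cont)+
  have blc: "bounded_linear (\<lambda>x. calc h (Bs n) x - calc h B x)" if "continuous_on {-1..1} h" for h n
    by (intro bounded_linear_sub cb.calc_bl[OF cbs that] cb.calc_bl[OF cbB that])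
  have i_iii: "(\<lambda>n. riesz_metric (As n) A) \<longlonglongrightarrow> 0 \<Longrightarrow> (\<lambda>n. gap_metric (As n) A) \<longlonglongrightarrow> 0"
  proof -
    assume "(\<lambda>n. riesz_metric (As n) A) \<longlonglongrightarrow> 0"
    then have gid: "cs.gf (\<lambda>t. t)" using gid_iff by simp
    have "(\<lambda>n. onorm (\<lambda>x. calc rp (Bs n) x - calc rp B x)) \<longlonglongrightarrow> 0"
      unfolding cs.Pc_iff[OF rpc] by (intro conjI all_from_id[OF gid] continuous_intros rpc)
    moreover have "(\<lambda>n. onorm (\<lambda>x. calc rm (Bs n) x - calc rm B x)) \<longlonglongrightarrow> 0"
      unfolding cs.Pc_iff[OF rmc] by (intro conjI all_from_id[OF gid] continuous_intros rmc)
    ultimately show ?thesis unfolding gap_eq by (rule tendsto_add_zero)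
  qed
  have iii_i: "(\<lambda>n. gap_metric (As n) A) \<longlonglongrightarrow> 0 \<Longrightarrow> (\<lambda>n. onorm (\<lambda>x. fcalc \<alpha> (As n) x - fcalc \<alpha> A x)) \<longlonglongrightarrow> 0
      \<Longrightarrow> (\<lambda>n. riesz_metric (As n) A) \<longlonglongrightarrow> 0"
  proof -
    assume gap: "(\<lambda>n. gap_metric (As n) A) \<longlonglongrightarrow> 0"
      and al: "(\<lambda>n. onorm (\<lambda>x. fcalc \<alpha> (As n) x - fcalc \<alpha> A x)) \<longlonglongrightarrow> 0"
    have "(\<lambda>n. onorm (\<lambda>x. calc rp (Bs n) x - calc rp B x)) \<longlonglongrightarrow> 0"
    proof (rule squeeze0)
      show "0 \<le> onorm (\<lambda>x. calc rp (Bs n) x - calc rp B x)" for n by (rule onorm_pos_le[OF blc[OF rpc]])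
      show "onorm (\<lambda>x. calc rp (Bs n) x - calc rp B x) \<le> gap_metric (As n) A" for n
        unfolding gap_eq using onorm_pos_le[OF blc[OF rmc]] by simp
    qed (rule gap)
    then have grp: "cs.gf (\<lambda>t. Re (rp t))" "cs.gf (\<lambda>t. Im (rp t))" using cs.Pc_iff[OF rpc] by auto
    have ac: "continuous_on {-1..1} (ext \<alpha>)" by (rule ext_cont[OF assms(2)])
    have "(\<lambda>n. onorm (\<lambda>x. calc (ext \<alpha>) (Bs n) x - calc (ext \<alpha>) B x)) \<longlonglongrightarrow> 0"
      using al by (simp add: fc[OF assms(2)] fc0[OF assms(2)])
    then have ga: "cs.gf (\<lambda>t. Re (ext \<alpha> t))" using cs.Pc_iff[OF ac] by auto
    have at1: "(\<alpha> \<longlongrightarrow> 1) at_top" using assms(3) by (rule tendsto_eventually)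
    have at0: "(\<alpha> \<longlongrightarrow> 0) at_bot" using assms(4) by (rule tendsto_eventually)
    have "cs.gf (\<lambda>t. t)"
    proof (rule cs.gf_all)
      fix x y :: real assume x: "x \<in> {-1..1}" and y: "y \<in> {-1..1}" and xy: "x \<noteq> y"
      show "\<exists>u. cs.gf u \<and> u x \<noteq> u y"
      proof (cases "x^2 = y^2")
        case False
        then have "Im (rp x) \<noteq> Im (rp y)" by (simp add: rp_def)
        then show ?thesis using grp(2) by blast
      next
        case True
        then have yx: "y = - x" using xy by (metis power2_eq_iff)
        then have x0: "x \<noteq> 0" using xy by auto
        show ?thesis
        proof (cases "\<bar>x\<bar> < 1")
          case True
          then have "x^2 < 1" using abs_square_less_1 by blast
          then have "sqf x > 0" by (simp add: sqf_def)
          moreover have "sqf y = sqf x" by (simp add: sqf_def yx)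
          ultimately have "Re (rp x) \<noteq> Re (rp y)" using x0 by (simp add: rp_def yx)
          then show ?thesis using grp(1) by blast
        next
          case False
          then have "x = 1 \<or> x = -1" using x by auto
          moreover have "Re (ext \<alpha> 1) = 1" "Re (ext \<alpha> (-1)) = 0" using ext_top[OF at1] ext_bot[OF at0] by simp_all
          ultimately have "Re (ext \<alpha> x) \<noteq> Re (ext \<alpha> y)" using yx by auto
          then show ?thesis using ga by blast
        qed
      qed
    qed (simp add: continuous_on_id)
    then show ?thesis using gid_iff by simp
  qed
  show ?thesis
  proof (rule conjI)
    show "(\<lambda>n. riesz_metric (As n) A) \<longlonglongrightarrow> 0 \<longleftrightarrow> (\<forall>f\<in>algA. (\<lambda>n. onorm (\<lambda>x. fcalc f (As n) x - fcalc f A x)) \<longlonglongrightarrow> 0)"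
      using i_ii ii_i by blast
    show "(\<forall>f\<in>algA. (\<lambda>n. onorm (\<lambda>x. fcalc f (As n) x - fcalc f A x)) \<longlonglongrightarrow> 0) \<longleftrightarrow>
      ((\<lambda>n. gap_metric (As n) A) \<longlonglongrightarrow> 0 \<and> (\<lambda>n. onorm (\<lambda>x. fcalc \<alpha> (As n) x - fcalc \<alpha> A x)) \<longlonglongrightarrow> 0)"
    proof
      assume ii: "\<forall>f\<in>algA. (\<lambda>n. onorm (\<lambda>x. fcalc f (As n) x - fcalc f A x)) \<longlonglongrightarrow> 0"
      show "(\<lambda>n. gap_metric (As n) A) \<longlonglongrightarrow> 0 \<and> (\<lambda>n. onorm (\<lambda>x. fcalc \<alpha> (As n) x - fcalc \<alpha> A x)) \<longlonglongrightarrow> 0"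
        using i_iii[OF ii_i[OF ii]] ii assms(2) by blast
    next
      assume "(\<lambda>n. gap_metric (As n) A) \<longlonglongrightarrow> 0 \<and> (\<lambda>n. onorm (\<lambda>x. fcalc \<alpha> (As n) x - fcalc \<alpha> A x)) \<longlonglongrightarrow> 0"
      then show "\<forall>f\<in>algA. (\<lambda>n. onorm (\<lambda>x. fcalc f (As n) x - fcalc f A x)) \<longlonglongrightarrow> 0"
        using i_ii iii_i by blast
    qed
  qed
qed

end
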